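(* Let $\mathcal{G}$ be a groupoid (not necessarily finite). Define $\widetilde{S}_{*1}\colon\mathrm{Aut}(\mathcal{G})\to h\mathrm{aut}(\widetilde{S}(\mathcal{G}))$ and $\widetilde{S}_{*2}\colon\mathrm{Aut}(\mathcal{G})\to h\mathrm{Aut}(\widetilde{S}(\mathcal{G}))$ by $u\mapsto[\widetilde{S}(u)]$. Then $\eta_{\widetilde{S}(\mathcal{G})}\circ\widetilde{S}_{*2}=\widetilde{S}_{*1}$, and $\widetilde{S}_{*1}$ is a monomorphism of groups. Moreover, if $\mathcal{G}$ is finite, then $\widetilde{S}_{*2}$ is an isomorphism.
   Context: For a groupoid $\mathcal{H}$, the quasi-schemoid $\widetilde{S}(\mathcal{H})=(\widetilde{\mathcal{H}},S)$ has $ob(\widetilde{\mathcal{H}})=mor(\mathcal{H})$, $\mathrm{Hom}_{\widetilde{\mathcal{H}}}(g,h)=\{(h,g)\}$ if $t(h)=t(g)$ and empty otherwise (composition $(k,h)\circ(h,g)=(k,g)$), and partition $S=\{\mathcal{G}_f\}_{f\in mor(\mathcal{H})}$ with $\mathcal{G}_f=\{(k,l)\mid k^{-1}l=f\}$. For a functor $u\colon\mathcal{G}\to\mathcal{H}$ of groupoids, $\widetilde{S}(u)$ is the morphism of quasi-schemoids sending an object $i$ to $u(i)$ and a morphism $(h,g)$ to $(u(h),u(g))$. A quasi-schemoid is a small category with a partition of its morphisms such that for blocks $\sigma,\tau,\mu$ and $f,g\in\mu$ the number of composable pairs $(a,b)\in\sigma\times\tau$ with $a\circ b=f$ equals that with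 $a\circ b=g$; a morphism of quasi-schemoids is a functor sending each block of the source partition into some block of the target partition. Product: $(\mathcal{C},S)\times(\mathcal{E},S')=(\mathcal{C}\times\mathcal{E},\{\sigma\times\tau\})$. $[1]$ has objects $0,1$ and one non-identity morphism $0\to1$; $I=([1],\{\{f\}\}_f)$. A homotopy $H\colon F\Rightarrow G$ is a morphism $H\colon(\mathcal{C},S)\times I\to(\mathcal{D},S')$ with $H\circ\varepsilon_0=F$, $H\circ\varepsilon_1=G$ ($\varepsilon_i(a)=(a,i)$, $\varepsilon_i(f)=(f,1_i)$). $F\sim G$ means there is a homotopy $F\Rightarrow G$ or $G\Rightarrow F$; $F\simeq G$ means a finite chain $F=F_0\sim\cdots\sim F_n=G$ ($\simeq$ is an equivalence relation compatible with composition). $h\mathrm{aut}(A)$ is the group of $\simeq$-classes of self-homotopy equivalences of $A$ (morphisms $F\colon A\to A$ with some $G$ satisfying $FG\simeq1$, $GF\simeq1$) under composition; $h\mathrm{Aut}(A)$ is the group of $\simeq$-classes of automorphisms (invertible morphisms) of the quasi-schemoid $A$; $\eta_A\colon h\mathrm{Aut}(A)\to h\mathrm{aut}(A)$ is the natural map induced by inclusion. $\mathrm{Aut}(\mathcal{G})$ is the group of autofunctors (invertible functors) of $\mathcal{G}$. *)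

theory Defs
  imports "HOL-Algebra.Group" "HOL-Library.Equipollence"
begin

record ('o, 'm) cat =
  cobj :: "'o set"
  cmor :: "'m set"
  cdom :: "'m \<Rightarrow> 'o"
  ccod :: "'m \<Rightarrow> 'o"
  cid  :: "'o \<Rightarrow> 'm"
  ccomp :: "'m \<Rightarrow> 'm \<Rightarrow> 'm"   (* ccomp C g f = g \<circ> f, defined when ccod f = cdom g *)

definition is_cat :: "('o, 'm, 'z) cat_scheme \<Rightarrow> bool" where
  "is_cat C \<longleftrightarrow>
     (\<forall>f\<in>cmor C. cdom C f \<in> cobj C \<and> ccod C f \<in> cobj C) \<and>
     (\<forall>a\<in>cobj C. cid C a \<in> cmor C \<and> cdom C (cid C a) = a \<and> ccod C (cid C a) = a) \<and>
     (\<forall>f\<in>cmor C. \<forall>g\<in>cmor C. ccod C f = cdom C g \<longrightarrow>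
        ccomp C g f \<in> cmor C \<and> cdom C (ccomp C g f) = cdom C f \<and> ccod C (ccomp C g f) = ccod C g) \<and>
     (\<forall>f\<in>cmor C. \<forall>g\<in>cmor C. \<forall>h\<in>cmor C. ccod C f = cdom C g \<longrightarrow> ccod C g = cdom C h \<longrightarrow>
        ccomp C h (ccomp C g f) = ccomp C (ccomp C h g) f) \<and>
     (\<forall>f\<in>cmor C. ccomp C f (cid C (cdom C f)) = f \<and> ccomp C (cid C (ccod C f)) f = f)"

definition is_groupoid :: "('o, 'm, 'z) cat_scheme \<Rightarrow> bool" where
  "is_groupoid C \<longleftrightarrow> is_cat C \<and>
     (\<forall>f\<in>cmor C. \<exists>g\<in>cmor C. cdom C g = ccod C f \<and> ccod C g = cdom C f \<and>
        ccomp C g f = cid C (cdom C f) \<and> ccomp C f g = cid C (ccod C f))"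

definition ginv :: "('o, 'm, 'z) cat_scheme \<Rightarrow> 'm \<Rightarrow> 'm" where
  "ginv C f = (SOME g. g \<in> cmor C \<and> cdom C g = ccod C f \<and> ccod C g = cdom C f \<and>
        ccomp C g f = cid C (cdom C f) \<and> ccomp C f g = cid C (ccod C f))"

text \<open>Functors are pairs (object map, morphism map), extensional outside the carriers,
  so that equal functors are equal as HOL values.\<close>

type_synonym ('a, 'b, 'c, 'd) fctr = "('a \<Rightarrow> 'c) \<times> ('b \<Rightarrow> 'd)"

definition is_functor :: "('a, 'b) cat \<Rightarrow> ('c, 'd) cat \<Rightarrow> ('a, 'b, 'c, 'd) fctr \<Rightarrow> bool" where
  "is_functor C D F \<longleftrightarrow>
     (\<forall>a\<in>cobj C. fst F a \<in> cobj D) \<and>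
     (\<forall>f\<in>cmor C. snd F f \<in> cmor D \<and> cdom D (snd F f) = fst F (cdom C f) \<and>
                  ccod D (snd F f) = fst F (ccod C f)) \<and>
     (\<forall>a\<in>cobj C. snd F (cid C a) = cid D (fst F a)) \<and>
     (\<forall>f\<in>cmor C. \<forall>g\<in>cmor C. ccod C f = cdom C g \<longrightarrow>
        snd F (ccomp C g f) = ccomp D (snd F g) (snd F f)) \<and>
     fst F \<in> extensional (cobj C) \<and> snd F \<in> extensional (cmor C)"

definition fcomp :: "('a, 'b) cat \<Rightarrow> ('c, 'd, 'e, 'f) fctr \<Rightarrow> ('a, 'b, 'c, 'd) fctr \<Rightarrow> ('a, 'b, 'e, 'f) fctr" where
  "fcomp C F G = ((\<lambda>a\<in>cobj C. fst F (fst G a)), (\<lambda>f\<in>cmor C. snd F (snd G f)))"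

definition fid :: "('a, 'b) cat \<Rightarrow> ('a, 'b, 'a, 'b) fctr" where
  "fid C = ((\<lambda>a\<in>cobj C. a), (\<lambda>f\<in>cmor C. f))"

definition is_autofunctor :: "('a, 'b) cat \<Rightarrow> ('a, 'b, 'a, 'b) fctr \<Rightarrow> bool" where
  "is_autofunctor C F \<longleftrightarrow> is_functor C C F \<and>
     (\<exists>G. is_functor C C G \<and> fcomp C G F = fid C \<and> fcomp C F G = fid C)"

definition AutG :: "('a, 'b) cat \<Rightarrow> ('a, 'b, 'a, 'b) fctr monoid" where
  "AutG C = \<lparr>carrier = {F. is_autofunctor C F}, mult = fcomp C, one = fid C\<rparr>"

type_synonym ('a, 'b) qs = "('a, 'b) cat \<times> 'b set set"

definition is_qs :: "('a, 'b) qs \<Rightarrow> bool" where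
  "is_qs A \<longleftrightarrow> is_cat (fst A) \<and>
     (\<forall>\<sigma>\<in>snd A. \<sigma> \<noteq> {}) \<and> \<Union>(snd A) = cmor (fst A) \<and>
     (\<forall>\<sigma>\<in>snd A. \<forall>\<tau>\<in>snd A. \<sigma> \<noteq> \<tau> \<longrightarrow> \<sigma> \<inter> \<tau> = {}) \<and>
     (\<forall>\<sigma>\<in>snd A. \<forall>\<tau>\<in>snd A. \<forall>\<mu>\<in>snd A. \<forall>f\<in>\<mu>. \<forall>g\<in>\<mu>.
        {(a, b). a \<in> \<sigma> \<and> b \<in> \<tau> \<and> ccod (fst A) b = cdom (fst A) a \<and> ccomp (fst A) a b = f}
        \<approx> {(a, b). a \<in> \<sigma> \<and> b \<in> \<tau> \<and> ccod (fst A) b = cdom (fst A) a \<and> ccomp (fst A) a b = g})"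

definition qs_mor :: "('a, 'b) qs \<Rightarrow> ('c, 'd) qs \<Rightarrow> ('a, 'b, 'c, 'd) fctr \<Rightarrow> bool" where
  "qs_mor A B F \<longleftrightarrow> is_functor (fst A) (fst B) F \<and>
     (\<forall>\<sigma>\<in>snd A. \<exists>\<tau>\<in>snd B. snd F ` \<sigma> \<subseteq> \<tau>)"

definition cat1 :: "(nat, nat \<times> nat) cat" where
  "cat1 = \<lparr>cobj = {0, 1}, cmor = {(0, 0), (1, 1), (0, 1)},
           cdom = fst, ccod = snd, cid = (\<lambda>i. (i, i)),
           ccomp = (\<lambda>g f. (fst f, snd g))\<rparr>"

definition qsI :: "(nat, nat \<times> nat) qs" where
  "qsI = (cat1, {{f} | f. f \<in> cmor cat1})"

definition prod_cat :: "('a, 'b) cat \<Rightarrow> ('c, 'd) cat \<Rightarrow> ('a \<times> 'c, 'b \<times> 'd) cat" where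
  "prod_cat C E = \<lparr>cobj = cobj C \<times> cobj E, cmor = cmor C \<times> cmor E,
     cdom = (\<lambda>(f, g). (cdom C f, cdom E g)), ccod = (\<lambda>(f, g). (ccod C f, ccod E g)),
     cid = (\<lambda>(a, b). (cid C a, cid E b)),
     ccomp = (\<lambda>(f, g) (f', g'). (ccomp C f f', ccomp E g g'))\<rparr>"

definition prod_qs :: "('a, 'b) qs \<Rightarrow> ('c, 'd) qs \<Rightarrow> ('a \<times> 'c, 'b \<times> 'd) qs" where
  "prod_qs A B = (prod_cat (fst A) (fst B), {\<sigma> \<times> \<tau> | \<sigma> \<tau>. \<sigma> \<in> snd A \<and> \<tau> \<in> snd B})"

definition htpy :: "('a, 'b) qs \<Rightarrow> ('c, 'd) qs \<Rightarrow> ('a, 'b, 'c, 'd) fctr \<Rightarrow> ('a, 'b, 'c, 'd) fctr \<Rightarrow> bool" where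
  "htpy A B F G \<longleftrightarrow> qs_mor A B F \<and> qs_mor A B G \<and>
     (\<exists>H. qs_mor (prod_qs A qsI) B H \<and>
        (\<forall>a\<in>cobj (fst A). fst H (a, 0) = fst F a \<and> fst H (a, 1) = fst G a) \<and>
        (\<forall>f\<in>cmor (fst A). snd H (f, (0, 0)) = snd F f \<and> snd H (f, (1, 1)) = snd G f))"

definition htpy_sim :: "('a, 'b) qs \<Rightarrow> ('c, 'd) qs \<Rightarrow> (('a, 'b, 'c, 'd) fctr \<times> ('a, 'b, 'c, 'd) fctr) set" where
  "htpy_sim A B = {(F, G). htpy A B F G \<or> htpy A B G F}"

definition htpc :: "('a, 'b) qs \<Rightarrow> ('c, 'd) qs \<Rightarrow> ('a, 'b, 'c, 'd) fctr \<Rightarrow> ('a, 'b, 'c, 'd) fctr \<Rightarrow> bool" where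
  "htpc A B F G \<longleftrightarrow> qs_mor A B F \<and> qs_mor A B G \<and> (F, G) \<in> (htpy_sim A B)\<^sup>*"

definition hcls :: "('a, 'b) qs \<Rightarrow> ('a, 'b, 'a, 'b) fctr \<Rightarrow> ('a, 'b, 'a, 'b) fctr set" where
  "hcls A F = {G. htpc A A F G}"

definition self_heq :: "('a, 'b) qs \<Rightarrow> ('a, 'b, 'a, 'b) fctr \<Rightarrow> bool" where
  "self_heq A F \<longleftrightarrow> qs_mor A A F \<and>
     (\<exists>G. qs_mor A A G \<and> htpc A A (fcomp (fst A) F G) (fid (fst A)) \<and>
          htpc A A (fcomp (fst A) G F) (fid (fst A)))"

definition haut :: "('a, 'b) qs \<Rightarrow> ('a, 'b, 'a, 'b) fctr set monoid" where
  "haut A = \<lparr>carrier = {hcls A F | F. self_heq A F},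
     mult = (\<lambda>X Y. hcls A (fcomp (fst A) (SOME F. F \<in> X) (SOME G. G \<in> Y))),
     one = hcls A (fid (fst A))\<rparr>"

definition qs_aut :: "('a, 'b) qs \<Rightarrow> ('a, 'b, 'a, 'b) fctr \<Rightarrow> bool" where
  "qs_aut A F \<longleftrightarrow> qs_mor A A F \<and>
     (\<exists>G. qs_mor A A G \<and> fcomp (fst A) G F = fid (fst A) \<and> fcomp (fst A) F G = fid (fst A))"

definition acls :: "('a, 'b) qs \<Rightarrow> ('a, 'b, 'a, 'b) fctr \<Rightarrow> ('a, 'b, 'a, 'b) fctr set" where
  "acls A F = {G. qs_aut A G \<and> htpc A A F G}"

definition hAut :: "('a, 'b) qs \<Rightarrow> ('a, 'b, 'a, 'b) fctr set monoid" where
  "hAut A = \<lparr>carrier = {acls A F | F. qs_aut A F},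
     mult = (\<lambda>X Y. acls A (fcomp (fst A) (SOME F. F \<in> X) (SOME G. G \<in> Y))),
     one = acls A (fid (fst A))\<rparr>"

text \<open>\<eta>_A : hAut(A) \<rightarrow> haut(A), induced by inclusion.\<close>
definition eta :: "('a, 'b) qs \<Rightarrow> ('a, 'b, 'a, 'b) fctr set \<Rightarrow> ('a, 'b, 'a, 'b) fctr set" where
  "eta A X = hcls A (SOME F. F \<in> X)"

definition Stilde_cat :: "('o, 'm) cat \<Rightarrow> ('m, 'm \<times> 'm) cat" where
  "Stilde_cat H = \<lparr>cobj = cmor H,
     cmor = {(h, g). h \<in> cmor H \<and> g \<in> cmor H \<and> ccod H h = ccod H g},
     cdom = snd, ccod = fst, cid = (\<lambda>g. (g, g)),
     ccomp = (\<lambda>(k, h') (h, g). (k, g))\<rparr>"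

definition Stilde :: "('o, 'm) cat \<Rightarrow> ('m, 'm \<times> 'm) qs" where
  "Stilde H = (Stilde_cat H,
     {{(k, l) \<in> cmor (Stilde_cat H). ccomp H (ginv H k) l = f} | f. f \<in> cmor H})"

definition Stilde_fun :: "('o, 'm) cat \<Rightarrow> ('o, 'm, 'o, 'm) fctr \<Rightarrow> ('m, 'm \<times> 'm, 'm, 'm \<times> 'm) fctr" where
  "Stilde_fun H u = ((\<lambda>i\<in>cmor H. snd u i),
     (\<lambda>p\<in>cmor (Stilde_cat H). (snd u (fst p), snd u (snd p))))"

definition S1 :: "('o, 'm) cat \<Rightarrow> ('o, 'm, 'o, 'm) fctr \<Rightarrow> ('m, 'm \<times> 'm, 'm, 'm \<times> 'm) fctr set" where
  "S1 H u = hcls (Stilde H) (Stilde_fun H u)"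

definition S2 :: "('o, 'm) cat \<Rightarrow> ('o, 'm, 'o, 'm) fctr \<Rightarrow> ('m, 'm \<times> 'm, 'm, 'm \<times> 'm) fctr set" where
  "S2 H u = acls (Stilde H) (Stilde_fun H u)"

end

theory Submission
  imports Defs "HOL-Library.FuncSet"
begin

definition Jf :: "('o, 'm) cat \<Rightarrow> ('m, 'm \<times> 'm, 'm, 'm \<times> 'm) fctr \<Rightarrow> 'm \<Rightarrow> 'm" where
  "Jf G F = (\<lambda>a\<in>cmor G. ccomp G (fst F a) (ginv G (fst F (cid G (cdom G a)))))"

lemma fun_obj: "is_functor C D F \<Longrightarrow> a \<in> cobj C \<Longrightarrow> fst F a \<in> cobj D"
  unfolding is_functor_def by blast
lemma fun_mor: "is_functor C D F \<Longrightarrow> f \<in> cmor C \<Longrightarrow> snd F f \<in> cmor D"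
  unfolding is_functor_def by blast
lemma fun_dom: "is_functor C D F \<Longrightarrow> f \<in> cmor C \<Longrightarrow> cdom D (snd F f) = fst F (cdom C f)"
  unfolding is_functor_def by blast
lemma fun_cod: "is_functor C D F \<Longrightarrow> f \<in> cmor C \<Longrightarrow> ccod D (snd F f) = fst F (ccod C f)"
  unfolding is_functor_def by blast
lemma fun_id: "is_functor C D F \<Longrightarrow> a \<in> cobj C \<Longrightarrow> snd F (cid C a) = cid D (fst F a)"
  unfolding is_functor_def by blast
lemma fun_comp: "is_functor C D F \<Longrightarrow> f \<in> cmor C \<Longrightarrow> g \<in> cmor C \<Longrightarrow> ccod C f = cdom C g \<Longrightarrow>
   snd F (ccomp C g f) = ccomp D (snd F g) (snd F f)"
  unfolding is_functor_def by blast
lemma fun_ext: "is_functor C D F \<Longrightarrow> fst F \<in> extensional (cobj C)" "is_functor C D F \<Longrightarrow> snd F \<in> extensional (cmor C)"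
  unfolding is_functor_def by blast+
lemma qm_fun: "qs_mor X Y F \<Longrightarrow> is_functor (fst X) (fst Y) F"
  unfolding qs_mor_def by blast
lemma qm_blk0: "qs_mor X Y F \<Longrightarrow> \<sigma> \<in> snd X \<Longrightarrow> \<exists>\<tau>\<in>snd Y. snd F ` \<sigma> \<subseteq> \<tau>"
  unfolding qs_mor_def by blast

lemma prod_cat_simps[simp]: "cobj (prod_cat C E) = cobj C \<times> cobj E" "cmor (prod_cat C E) = cmor C \<times> cmor E"
  "cdom (prod_cat C E) (f, g) = (cdom C f, cdom E g)" "ccod (prod_cat C E) (f, g) = (ccod C f, ccod E g)"
  "cid (prod_cat C E) (a, b) = (cid C a, cid E b)"
  "ccomp (prod_cat C E) (f, g) (f', g') = (ccomp C f f', ccomp E g g')"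
  unfolding prod_cat_def by simp_all

lemma cat1_simps[simp]: "cobj cat1 = {0, 1}" "cmor cat1 = {(0, 0), (1, 1), (0, 1)}"
  "cdom cat1 = fst" "ccod cat1 = snd" "cid cat1 = (\<lambda>i. (i, i))" "ccomp cat1 = (\<lambda>g f. (fst f, snd g))"
  unfolding cat1_def by simp_all

lemma qsI_simps[simp]: "fst qsI = cat1" "snd qsI = {{f} | f. f \<in> cmor cat1}"
  unfolding qsI_def by simp_all

lemma prod_qs_simps[simp]: "fst (prod_qs X Y) = prod_cat (fst X) (fst Y)"
  "snd (prod_qs X Y) = {\<sigma> \<times> \<tau> | \<sigma> \<tau>. \<sigma> \<in> snd X \<and> \<tau> \<in> snd Y}"
  unfolding prod_qs_def by simp_all

lemma fun_fcomp: assumes F: "is_functor B C F" and K: "is_functor A B K" and cA: "is_cat A"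
  shows "is_functor A C (fcomp A F K)"
  unfolding is_functor_def
proof (intro conjI ballI impI)
  fix a assume a: "a \<in> cobj A"
  show "fst (fcomp A F K) a \<in> cobj C" using a fun_obj[OF F fun_obj[OF K a]] unfolding fcomp_def by simp
  have "cid A a \<in> cmor A" using cA a unfolding is_cat_def by blast
  then show "snd (fcomp A F K) (cid A a) = cid C (fst (fcomp A F K) a)"
    using a fun_id[OF K a] fun_id[OF F fun_obj[OF K a]] unfolding fcomp_def by simp
next
  fix f assume f: "f \<in> cmor A"
  have d: "cdom A f \<in> cobj A" "ccod A f \<in> cobj A" using cA f unfolding is_cat_def by blast+
  show "snd (fcomp A F K) f \<in> cmor C" "cdom C (snd (fcomp A F K) f) = fst (fcomp A F K) (cdom A f)"
    "ccod C (snd (fcomp A F K) f) = fst (fcomp A F K) (ccod A f)"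
    using f d fun_mor[OF F fun_mor[OF K f]] fun_dom[OF F fun_mor[OF K f]] fun_cod[OF F fun_mor[OF K f]]
      fun_dom[OF K f] fun_cod[OF K f] unfolding fcomp_def by simp_all
next
  fix f g assume f: "f \<in> cmor A" and g: "g \<in> cmor A" and fg: "ccod A f = cdom A g"
  have c: "ccomp A g f \<in> cmor A" using cA f g fg unfolding is_cat_def by blast
  show "snd (fcomp A F K) (ccomp A g f) = ccomp C (snd (fcomp A F K) g) (snd (fcomp A F K) f)"
    using c f g fun_comp[OF K f g fg] fun_comp[OF F fun_mor[OF K f] fun_mor[OF K g]]
      fun_dom[OF K g] fun_cod[OF K f] fg unfolding fcomp_def by simp
next
  show "fst (fcomp A F K) \<in> extensional (cobj A)" "snd (fcomp A F K) \<in> extensional (cmor A)"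
    unfolding fcomp_def by simp_all
qed

lemma fun_fid: "is_cat C \<Longrightarrow> is_functor C C (fid C)"
  unfolding is_functor_def fid_def is_cat_def by auto

lemma fcomp_assoc: assumes K: "is_functor C C K" and L: "is_functor C C L"
  shows "fcomp C (fcomp C F K) L = fcomp C F (fcomp C K L)"
proof -
  have "fst (fcomp C (fcomp C F K) L) = fst (fcomp C F (fcomp C K L))"
    unfolding fcomp_def using fun_obj[OF L] by (auto intro!: restrict_ext)
  moreover have "snd (fcomp C (fcomp C F K) L) = snd (fcomp C F (fcomp C K L))"
    unfolding fcomp_def using fun_mor[OF L] by (auto intro!: restrict_ext)
  ultimately show ?thesis by (simp add: prod_eq_iff)
qed

lemma fcomp_fid_l: assumes F: "is_functor C C F" shows "fcomp C (fid C) F = F"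
proof -
  have "fst (fcomp C (fid C) F) = fst F"
    unfolding fcomp_def fid_def using fun_obj[OF F] fun_ext(1)[OF F] by (auto simp: extensional_def)
  moreover have "snd (fcomp C (fid C) F) = snd F"
    unfolding fcomp_def fid_def using fun_mor[OF F] fun_ext(2)[OF F] by (auto simp: extensional_def)
  ultimately show ?thesis by (simp add: prod_eq_iff)
qed

lemma fcomp_fid_r: assumes F: "is_functor C C F" shows "fcomp C F (fid C) = F"
proof -
  have "fst (fcomp C F (fid C)) = fst F"
    unfolding fcomp_def fid_def using fun_ext(1)[OF F] by (auto simp: extensional_def)
  moreover have "snd (fcomp C F (fid C)) = snd F"
    unfolding fcomp_def fid_def using fun_ext(2)[OF F] by (auto simp: extensional_def)
  ultimately show ?thesis by (simp add: prod_eq_iff)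
qed

lemma AutG_group: assumes cC: "is_cat C" shows "group (AutG C)"
proof (rule groupI)
  fix x y assume x: "x \<in> carrier (AutG C)" and y: "y \<in> carrier (AutG C)"
  obtain x' where x': "is_functor C C x" "is_functor C C x'" "fcomp C x' x = fid C" "fcomp C x x' = fid C"
    using x unfolding AutG_def is_autofunctor_def by auto
  obtain y' where y': "is_functor C C y" "is_functor C C y'" "fcomp C y' y = fid C" "fcomp C y y' = fid C"
    using y unfolding AutG_def is_autofunctor_def by auto
  have xy: "is_functor C C (fcomp C x y)" "is_functor C C (fcomp C y' x')"
    using fun_fcomp[OF _ _ cC] x' y' by blast+
  have "fcomp C (fcomp C y' x') (fcomp C x y) = fcomp C y' (fcomp C x' (fcomp C x y))"
    using fcomp_assoc xy x' y' by blast
  also have "fcomp C x' (fcomp C x y) = fcomp C (fcomp C x' x) y" using fcomp_assoc x' y' by metis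
  also have "\<dots> = y" using x' y' fcomp_fid_l by simp
  finally have 1: "fcomp C (fcomp C y' x') (fcomp C x y) = fid C" using y' by simp
  have "fcomp C (fcomp C x y) (fcomp C y' x') = fcomp C x (fcomp C y (fcomp C y' x'))"
    using fcomp_assoc xy x' y' by blast
  also have "fcomp C y (fcomp C y' x') = fcomp C (fcomp C y y') x'" using fcomp_assoc x' y' by metis
  also have "\<dots> = x'" using x' y' fcomp_fid_l by simp
  finally have 2: "fcomp C (fcomp C x y) (fcomp C y' x') = fid C" using x' by simp
  have "is_autofunctor C (fcomp C x y)" unfolding is_autofunctor_def using xy 1 2 by blast
  thus "x \<otimes>\<^bsub>AutG C\<^esub> y \<in> carrier (AutG C)" unfolding AutG_def by simp
next
  show "\<one>\<^bsub>AutG C\<^esub> \<in> carrier (AutG C)"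
  proof -
    have "is_autofunctor C (fid C)" unfolding is_autofunctor_def
      using fun_fid[OF cC] fcomp_fid_l[OF fun_fid[OF cC]] by blast
    thus ?thesis unfolding AutG_def by simp
  qed
next
  fix x y z assume "x \<in> carrier (AutG C)" "y \<in> carrier (AutG C)" "z \<in> carrier (AutG C)"
  then show "x \<otimes>\<^bsub>AutG C\<^esub> y \<otimes>\<^bsub>AutG C\<^esub> z = x \<otimes>\<^bsub>AutG C\<^esub> (y \<otimes>\<^bsub>AutG C\<^esub> z)"
    unfolding AutG_def is_autofunctor_def by (simp add: fcomp_assoc)
next
  fix x assume "x \<in> carrier (AutG C)"
  then show "\<one>\<^bsub>AutG C\<^esub> \<otimes>\<^bsub>AutG C\<^esub> x = x"
    unfolding AutG_def is_autofunctor_def by (simp add: fcomp_fid_l)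
next
  fix x assume x: "x \<in> carrier (AutG C)"
  obtain x' where x': "is_functor C C x" "is_functor C C x'" "fcomp C x' x = fid C" "fcomp C x x' = fid C"
    using x unfolding AutG_def is_autofunctor_def by auto
  have "is_autofunctor C x'" unfolding is_autofunctor_def using x' by blast
  hence "x' \<in> carrier (AutG C)" unfolding AutG_def by simp
  moreover have "x' \<otimes>\<^bsub>AutG C\<^esub> x = \<one>\<^bsub>AutG C\<^esub>" using x' unfolding AutG_def by simp
  ultimately show "\<exists>y\<in>carrier (AutG C). y \<otimes>\<^bsub>AutG C\<^esub> x = \<one>\<^bsub>AutG C\<^esub>" by blast
qed

locale gpd =
  fixes G :: "('o, 'm) cat"
  assumes gpd: "is_groupoid G"
begin

abbreviation "M \<equiv> cmor G"
abbreviation "Ob \<equiv> cobj G"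
abbreviation "dm \<equiv> cdom G"
abbreviation "cd \<equiv> ccod G"
abbreviation "e \<equiv> cid G"
abbreviation "cp \<equiv> ccomp G"
abbreviation "iv \<equiv> ginv G"

lemma cat: "is_cat G" using gpd unfolding is_groupoid_def by simp

lemma dm_ob[simp]: "f \<in> M \<Longrightarrow> dm f \<in> Ob" and cd_ob[simp]: "f \<in> M \<Longrightarrow> cd f \<in> Ob"
  using cat unfolding is_cat_def by auto

lemma e_props[simp]: "a \<in> Ob \<Longrightarrow> e a \<in> M" "a \<in> Ob \<Longrightarrow> dm (e a) = a" "a \<in> Ob \<Longrightarrow> cd (e a) = a"
  using cat unfolding is_cat_def by auto

lemma cp_props[simp]:
  assumes "f \<in> M" "g \<in> M" "cd f = dm g"
  shows "cp g f \<in> M" "dm (cp g f) = dm f" "cd (cp g f) = cd g"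
  using cat assms unfolding is_cat_def by auto

lemma assoc[simp]:
  assumes "f \<in> M" "g \<in> M" "h \<in> M" "cd f = dm g" "cd g = dm h"
  shows "cp (cp h g) f = cp h (cp g f)"
  using cat assms unfolding is_cat_def by metis

lemma idr[simp]: "f \<in> M \<Longrightarrow> dm f = x \<Longrightarrow> cp f (e x) = f"
  using cat unfolding is_cat_def by auto
lemma idl[simp]: "f \<in> M \<Longrightarrow> cd f = x \<Longrightarrow> cp (e x) f = f"
  using cat unfolding is_cat_def by auto

lemma iv_ex: "f \<in> M \<Longrightarrow> \<exists>g. g \<in> M \<and> dm g = cd f \<and> cd g = dm f \<and>
        cp g f = e (dm f) \<and> cp f g = e (cd f)"
  using gpd unfolding is_groupoid_def by blast

lemma iv_props0: "f \<in> M \<Longrightarrow> iv f \<in> M \<and> dm (iv f) = cd f \<and> cd (iv f) = dm f \<and>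
        cp (iv f) f = e (dm f) \<and> cp f (iv f) = e (cd f)"
  unfolding ginv_def by (rule someI_ex, rule iv_ex)

lemma iv_props[simp]: "f \<in> M \<Longrightarrow> iv f \<in> M" "f \<in> M \<Longrightarrow> dm (iv f) = cd f"
  "f \<in> M \<Longrightarrow> cd (iv f) = dm f"
  "f \<in> M \<Longrightarrow> cp (iv f) f = e (dm f)" "f \<in> M \<Longrightarrow> cp f (iv f) = e (cd f)"
  using iv_props0 by auto

lemma canc1[simp]: assumes "f \<in> M" "g \<in> M" "cd g = dm f" shows "cp (iv f) (cp f g) = g"
proof -
  have "cp (cp (iv f) f) g = cp (iv f) (cp f g)" by (rule assoc) (use assms in simp_all)
  thus ?thesis using assms by (simp del: assoc)
qed
lemma canc2[simp]: assumes "f \<in> M" "g \<in> M" "cd g = cd f" shows "cp f (cp (iv f) g) = g"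
proof -
  have "cp (cp f (iv f)) g = cp f (cp (iv f) g)" by (rule assoc) (use assms in simp_all)
  thus ?thesis using assms by (simp del: assoc)
qed

lemma lcancel: assumes "f \<in> M" "g \<in> M" "h \<in> M" "cd g = dm f" "cd h = dm f" "cp f g = cp f h"
  shows "g = h"
proof -
  have "cp (iv f) (cp f g) = cp (iv f) (cp f h)" using assms(6) by simp
  thus ?thesis using assms(1-5) by simp
qed

lemma rcancel: assumes "f \<in> M" "g \<in> M" "h \<in> M" "dm g = cd f" "dm h = cd f" "cp g f = cp h f"
  shows "g = h"
proof -
  have "cp (cp g f) (iv f) = cp (cp h f) (iv f)" using assms(6) by simp
  thus ?thesis using assms(1-5) by simp
qed

lemma iv_unique: assumes "g \<in> M" "f \<in> M" "dm g = cd f" "cp g f = e (dm f)"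
  shows "g = iv f"
  by (rule rcancel[of f]) (use assms in simp_all)

lemma iv_e[simp]: "a \<in> Ob \<Longrightarrow> iv (e a) = e a"
  by (rule iv_unique[symmetric]) simp_all

lemma iv_cp[simp]: assumes "f \<in> M" "g \<in> M" "cd f = dm g"
  shows "iv (cp g f) = cp (iv f) (iv g)"
  by (rule iv_unique[symmetric]) (use assms in simp_all)

lemma iv_iv[simp]: "f \<in> M \<Longrightarrow> iv (iv f) = f"
  by (rule iv_unique[symmetric]) simp_all


abbreviation "SC \<equiv> Stilde_cat G"
abbreviation "A \<equiv> Stilde G"
abbreviation "J \<equiv> Jf G"

lemma SC_simps[simp]: "cobj SC = M" "cmor SC = {(h, g). h \<in> M \<and> g \<in> M \<and> cd h = cd g}"
  "cdom SC = snd" "ccod SC = fst" "cid SC = (\<lambda>g. (g, g))"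
  "ccomp SC = (\<lambda>(k, h') (h, g). (k, g))"
  unfolding Stilde_cat_def by simp_all

definition "B f = {(k, l). k \<in> M \<and> l \<in> M \<and> cd k = cd l \<and> cp (iv k) l = f}"

lemma A_simps[simp]: "fst A = SC" "snd A = {B f | f. f \<in> M}"
  unfolding Stilde_def B_def by auto

lemma qm_obj: "qs_mor A A F \<Longrightarrow> a \<in> M \<Longrightarrow> fst F a \<in> M"
  using fun_obj[OF qm_fun, of A A F a] by simp

lemma qm_mor: assumes "qs_mor A A F" "k \<in> M" "l \<in> M" "cd k = cd l"
  shows "snd F (k, l) = (fst F k, fst F l)" "cd (fst F k) = cd (fst F l)"
proof -
  have "(k, l) \<in> cmor SC" using assms by simp
  hence "snd F (k, l) \<in> cmor SC \<and> cdom SC (snd F (k, l)) = fst F l \<and> ccod SC (snd F (k, l)) = fst F k"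
    using fun_mor[OF qm_fun[OF assms(1)]] fun_dom[OF qm_fun[OF assms(1)]] fun_cod[OF qm_fun[OF assms(1)]]
    by (simp only: A_simps SC_simps) simp
  thus "snd F (k, l) = (fst F k, fst F l)" "cd (fst F k) = cd (fst F l)"
    by (auto simp: prod_eq_iff)
qed

lemma qm_blk: assumes "qs_mor A A F" "k \<in> M" "l \<in> M" "cd k = cd l"
  "k' \<in> M" "l' \<in> M" "cd k' = cd l'" "cp (iv k) l = cp (iv k') l'"
  shows "cp (iv (fst F k)) (fst F l) = cp (iv (fst F k')) (fst F l')"
proof -
  define f where "f = cp (iv k) l"
  have "f \<in> M" using assms(2-4) unfolding f_def by simp
  hence "B f \<in> snd A" unfolding A_simps by blast
  then obtain \<tau> where "\<tau> \<in> snd A" and sub: "snd F ` B f \<subseteq> \<tau>"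
    using qm_blk0[OF assms(1)] by blast
  then obtain f' where \<tau>: "\<tau> = B f'" unfolding A_simps by blast
  have "(k, l) \<in> B f" "(k', l') \<in> B f" using assms(2-8) unfolding f_def B_def by auto
  hence "snd F (k, l) \<in> B f'" "snd F (k', l') \<in> B f'" using sub \<tau> by auto
  moreover have "snd F (k, l) = (fst F k, fst F l)" "snd F (k', l') = (fst F k', fst F l')"
    using qm_mor(1)[OF assms(1)] assms by auto
  ultimately show ?thesis unfolding B_def by auto
qed

lemma qm_dm: assumes "qs_mor A A F" "a \<in> M"
  shows "dm (fst F a) = dm (fst F (e (dm a)))"
proof -
  have "cp (iv (fst F a)) (fst F a) = cp (iv (fst F (e (dm a)))) (fst F (e (dm a)))"
    by (rule qm_blk) (use assms in simp_all)
  hence "e (dm (fst F a)) = e (dm (fst F (e (dm a))))" using assms qm_obj by simp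
  hence "dm (e (dm (fst F a))) = dm (e (dm (fst F (e (dm a)))))" by simp
  thus ?thesis using assms qm_obj by simp
qed

lemma qm_cd: assumes "qs_mor A A F" "a \<in> M"
  shows "cd (fst F a) = cd (fst F (e (cd a)))"
  using qm_mor(2)[OF assms(1), of a "e (cd a)"] assms by simp

lemma J_val: "a \<in> M \<Longrightarrow> J F a = cp (fst F a) (iv (fst F (e (dm a))))"
  unfolding Jf_def by simp

lemma J_props: assumes "qs_mor A A F" "a \<in> M"
  shows "J F a \<in> M" "dm (J F a) = cd (fst F (e (dm a)))" "cd (J F a) = cd (fst F (e (cd a)))"
  using assms qm_obj[OF assms(1)] qm_dm[OF assms] qm_cd[OF assms] by (simp_all add: J_val)

lemma J_dec: assumes "qs_mor A A F" "a \<in> M"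
  shows "fst F a = cp (J F a) (fst F (e (dm a)))"
  using assms qm_obj[OF assms(1)] qm_dm[OF assms] by (simp add: J_val)

lemma J_e: assumes "qs_mor A A F" "x \<in> Ob"
  shows "J F (e x) = e (cd (fst F (e x)))"
  using assms qm_obj[OF assms(1)] by (simp add: J_val)

lemma J_cp: assumes "qs_mor A A F" "b \<in> M" "c \<in> M" "cd c = dm b"
  shows "J F (cp b c) = cp (J F b) (J F c)"
proof -
  have Fb: "fst F b \<in> M" and Fbc: "fst F (cp b c) \<in> M" and Fc: "fst F c \<in> M"
    and Fe: "fst F (e (cd c)) \<in> M" and Fe2: "fst F (e (dm c)) \<in> M"
    using assms qm_obj[OF assms(1)] by simp_all
  have cdbc: "cd (fst F b) = cd (fst F (cp b c))"
    using qm_mor(2)[OF assms(1), of b "cp b c"] assms by simp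
  have cdc: "cd (fst F (e (cd c))) = cd (fst F c)"
    using qm_mor(2)[OF assms(1), of "e (cd c)" c] assms by simp
  have blk: "cp (iv (fst F b)) (fst F (cp b c)) = cp (iv (fst F (e (cd c)))) (fst F c)"
    by (rule qm_blk[OF assms(1)]) (use assms in simp_all)
  have "fst F (cp b c) = cp (fst F b) (cp (iv (fst F b)) (fst F (cp b c)))"
    using Fb Fbc cdbc by simp
  also have "\<dots> = cp (fst F b) (cp (iv (fst F (e (cd c)))) (fst F c))" by (simp only: blk)
  finally have eq: "fst F (cp b c) = cp (fst F b) (cp (iv (fst F (e (cd c)))) (fst F c))" .
  have dmb: "dm (fst F b) = dm (fst F (e (cd c)))"
    using qm_dm[OF assms(1) assms(2)] assms by simp
  have dmc: "dm (fst F c) = dm (fst F (e (dm c)))" using qm_dm[OF assms(1) assms(3)] .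
  show ?thesis using assms Fb Fc Fe Fe2 dmb dmc cdc
    by (simp add: J_val eq)
qed

lemma J_iv: assumes "qs_mor A A F" "a \<in> M"
  shows "J F (iv a) = iv (J F a)"
proof (rule iv_unique)
  show "J F (iv a) \<in> M" "J F a \<in> M" using J_props assms by simp_all
  show "dm (J F (iv a)) = cd (J F a)" using J_props assms by simp
  have "J F (cp (iv a) a) = cp (J F (iv a)) (J F a)" by (rule J_cp[OF assms(1)]) (use assms in simp_all)
  hence "cp (J F (iv a)) (J F a) = J F (cp (iv a) a)" by simp
  also have "\<dots> = e (dm (J F a))" using J_e J_props assms by simp
  finally show "cp (J F (iv a)) (J F a) = e (dm (J F a))" .
qed

lemma J_ext: "J F \<in> extensional M" unfolding Jf_def by simp

lemma htpy_J: assumes "htpy A A F K"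
  shows "J F = J K"
proof -
  have qF: "qs_mor A A F" and qK: "qs_mor A A K" using assms unfolding htpy_def by blast+
  obtain H where qH: "qs_mor (prod_qs A qsI) A H"
    and Hob0: "\<forall>a\<in>cobj (fst A). fst H (a, 0) = fst F a \<and> fst H (a, 1) = fst K a"
    using assms unfolding htpy_def by blast
  have Hob: "\<And>a. a \<in> M \<Longrightarrow> fst H (a, 0) = fst F a \<and> fst H (a, 1) = fst K a"
    using Hob0 by simp
  have fH: "is_functor (prod_cat SC cat1) SC H" using qm_fun[OF qH] by simp
  have Hm: "snd H ((a, a), (0, 1)) = (fst K a, fst F a) \<and> cd (fst K a) = cd (fst F a)" if "a \<in> M" for a
  proof -
    have m: "((a, a), (0::nat, 1::nat)) \<in> cmor (prod_cat SC cat1)" using that by simp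
    have "snd H ((a, a), (0, 1)) \<in> cmor SC" using fun_mor[OF fH m] .
    moreover have "cdom SC (snd H ((a, a), (0, 1))) = fst F a" using fun_dom[OF fH m] Hob that by simp
    moreover have "ccod SC (snd H ((a, a), (0, 1))) = fst K a" using fun_cod[OF fH m] Hob that by simp
    ultimately show ?thesis by (cases "snd H ((a, a), (0, 1))") simp
  qed
  have z: "cp (iv (fst K a)) (fst F a) = cp (iv (fst K (e (dm a)))) (fst F (e (dm a)))" if a: "a \<in> M" for a
  proof -
    define x where "x = e (dm a)"
    have x: "x \<in> M" "dm x = dm a" unfolding x_def using a by simp_all
    have "B x \<in> snd A" using x(1) unfolding A_simps by blast
    moreover have "{(0::nat, 1::nat)} \<in> snd qsI" unfolding qsI_simps cat1_simps by blast
    ultimately have "B x \<times> {(0, 1)} \<in> snd (prod_qs A qsI)" unfolding prod_qs_simps by blast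
    then obtain \<tau> where "\<tau> \<in> snd A" and sub: "snd H ` (B x \<times> {(0, 1)}) \<subseteq> \<tau>"
      using qm_blk0[OF qH] by blast
    then obtain f' where \<tau>: "\<tau> = B f'" unfolding A_simps by blast
    have "(a, a) \<in> B x" "(x, x) \<in> B x"
      using a x unfolding B_def by (simp_all add: x_def)
    hence "((a, a), (0::nat, 1::nat)) \<in> B x \<times> {(0, 1)}" "((x, x), (0::nat, 1::nat)) \<in> B x \<times> {(0, 1)}"
      by blast+
    hence "snd H ((a, a), (0, 1)) \<in> B f'" "snd H ((x, x), (0, 1)) \<in> B f'" using sub \<tau> by blast+
    hence "(fst K a, fst F a) \<in> B f'" "(fst K x, fst F x) \<in> B f'" using Hm[OF a] Hm[OF x(1)] by simp_all
    hence "cp (iv (fst K a)) (fst F a) = f'" "cp (iv (fst K x)) (fst F x) = f'" unfolding B_def by blast+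
    thus ?thesis unfolding x_def by simp
  qed
  show ?thesis
  proof (rule extensionalityI[OF J_ext J_ext])
    fix a assume a: "a \<in> M"
    define x where "x = e (dm a)"
    have x: "x \<in> M" "dm x = dm a" unfolding x_def using a by simp_all
    define w where "w = cp (iv (fst K a)) (fst F a)"
    have Fa: "fst F a \<in> M" "fst K a \<in> M" "fst F x \<in> M" "fst K x \<in> M" using qm_obj qF qK a x by auto
    have cda: "cd (fst K a) = cd (fst F a)" and cdx: "cd (fst K x) = cd (fst F x)" using Hm a x by auto
    have dma: "dm (fst F a) = dm (fst F x)" "dm (fst K a) = dm (fst K x)"
      using qm_dm[OF qF a] qm_dm[OF qK a] unfolding x_def by auto
    have w: "w \<in> M" "dm w = dm (fst F a)" "cd w = dm (fst K a)" unfolding w_def using Fa cda by simp_all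
    have Fa_eq: "fst F a = cp (fst K a) w" unfolding w_def using Fa cda by simp
    have Fx_eq: "fst F x = cp (fst K x) w" using z[OF a] unfolding w_def x_def[symmetric]
      using Fa cdx by simp
    have "J F a = cp (fst F a) (iv (fst F x))" using J_val a unfolding x_def by simp
    also have "\<dots> = cp (cp (fst K a) w) (iv (cp (fst K x) w))" using Fa_eq Fx_eq by simp
    also have "\<dots> = cp (fst K a) (iv (fst K x))" using Fa w dma by simp
    also have "\<dots> = J K a" using J_val a unfolding x_def by simp
    finally show "J F a = J K a" .
  qed
qed

lemma J_cd: assumes "qs_mor A A F" "a \<in> M" shows "cd (J F a) = cd (fst F a)"
  using assms qm_obj[OF assms(1)] qm_dm[OF assms] by (simp add: J_val)

definition "hh F K = ((\<lambda>p\<in>M \<times> {0::nat, 1}. if snd p = 0 then fst F (fst p) else fst K (fst p)),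
   (\<lambda>m\<in>cmor SC \<times> {(0::nat, 0::nat), (1, 1), (0, 1)}.
      ((if snd (snd m) = 0 then fst F else fst K) (fst (fst m)),
       (if fst (snd m) = 0 then fst F else fst K) (snd (fst m)))))"

lemma hh_fun: assumes qF: "qs_mor A A F" and qK: "qs_mor A A K" and JJ: "J F = J K"
  shows "is_functor (prod_cat SC cat1) SC (hh F K)"
proof -
  have cdFK: "cd (fst F a) = cd (fst K a)" if "a \<in> M" for a
    using J_cd[OF qF that] J_cd[OF qK that] JJ by simp
  have oF: "fst F a \<in> M" "fst K a \<in> M" if "a \<in> M" for a using qm_obj qF qK that by auto
  have cF: "cd (fst F k) = cd (fst F l)" if "k \<in> M" "l \<in> M" "cd k = cd l" for k l
    using qm_mor(2)[OF qF that] .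
  have obj: "fst (hh F K) p \<in> cobj SC" if "p \<in> cobj (prod_cat SC cat1)" for p
    using oF that unfolding hh_def by auto
  have mor: "snd (hh F K) m \<in> cmor SC \<and>
          cdom SC (snd (hh F K) m) = fst (hh F K) (cdom (prod_cat SC cat1) m) \<and>
          ccod SC (snd (hh F K) m) = fst (hh F K) (ccod (prod_cat SC cat1) m)"
    if m: "m \<in> cmor (prod_cat SC cat1)" for m
  proof -
    from m obtain k l i j where m_eq: "m = ((k, l), (i, j))" and kl: "k \<in> M" "l \<in> M" "cd k = cd l"
      and ij: "(i, j) \<in> {(0::nat, 0::nat), (1, 1), (0, 1)}" by auto
    have "snd (hh F K) m = ((if j = 0 then fst F else fst K) k, (if i = 0 then fst F else fst K) l)"
      using kl ij unfolding m_eq hh_def by auto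
    moreover have "fst (hh F K) (l, i) = (if i = 0 then fst F else fst K) l"
      "fst (hh F K) (k, j) = (if j = 0 then fst F else fst K) k"
      using kl ij unfolding hh_def by auto
    ultimately show ?thesis
      using m_eq kl oF cdFK cF[OF kl] cdFK[OF kl(1)] cdFK[OF kl(2)] by simp
  qed
  have ids: "snd (hh F K) (cid (prod_cat SC cat1) p) = cid SC (fst (hh F K) p)"
    if p: "p \<in> cobj (prod_cat SC cat1)" for p
  proof -
    from p obtain a i where p_eq: "p = (a, i)" and a: "a \<in> M" and i: "i \<in> {0::nat, 1}" by auto
    show ?thesis using a i unfolding p_eq hh_def by auto
  qed
  have comp: "snd (hh F K) (ccomp (prod_cat SC cat1) g f) = ccomp SC (snd (hh F K) g) (snd (hh F K) f)"
    if f: "f \<in> cmor (prod_cat SC cat1)" and g: "g \<in> cmor (prod_cat SC cat1)"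
      and fg: "ccod (prod_cat SC cat1) f = cdom (prod_cat SC cat1) g" for f g
  proof -
    from f g obtain k l i j k' l' i' j' where f_eq: "f = ((k', l'), (i', j'))" and g_eq: "g = ((k, l), (i, j))"
      and kl: "k \<in> M" "l \<in> M" "cd k = cd l" "k' \<in> M" "l' \<in> M" "cd k' = cd l'"
      and ij: "(i, j) \<in> {(0::nat, 0::nat), (1, 1), (0, 1)}" "(i', j') \<in> {(0::nat, 0::nat), (1, 1), (0, 1)}"
      by auto
    have eqs: "k' = l" "j' = i" using fg f_eq g_eq by simp_all
    have "(i', j) \<in> {(0::nat, 0::nat), (1, 1), (0, 1)}" using ij eqs by auto
    thus ?thesis using kl ij eqs unfolding f_eq g_eq hh_def by auto
  qed
  have ext: "fst (hh F K) \<in> extensional (cobj (prod_cat SC cat1))"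
    "snd (hh F K) \<in> extensional (cmor (prod_cat SC cat1))" unfolding hh_def by simp_all
  show ?thesis unfolding is_functor_def
    using obj mor ids comp ext by blast
qed

lemma J_htpy: assumes qF: "qs_mor A A F" and qK: "qs_mor A A K" and JJ: "J F = J K"
  shows "htpy A A F K"
proof -
  have cdFK: "cd (fst F a) = cd (fst K a)" if "a \<in> M" for a
    using J_cd[OF qF that] J_cd[OF qK that] JJ by simp
  have oF: "fst F a \<in> M" "fst K a \<in> M" if "a \<in> M" for a using qm_obj qF qK that by auto
  define v where "v f = cp (iv (fst K (e (cd f)))) (cp (J F f) (fst F (e (dm f))))" for f
  have key: "cp (iv (fst K k)) (fst F l) = v f" if kl: "(k, l) \<in> B f" for k l f
  proof -
    from kl have k: "k \<in> M" and l: "l \<in> M" and kl': "cd k = cd l" and f: "cp (iv k) l = f"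
      unfolding B_def by auto
    have fM: "f \<in> M" and dmf: "dm f = dm l" and cdf: "cd f = dm k" using f k l kl' by auto
    have l_eq: "l = cp k f" unfolding f[symmetric] using k l kl' by simp
    have Fl: "fst F l = cp (cp (J F k) (J F f)) (fst F (e (dm f)))"
    proof -
      have "fst F l = cp (J F l) (fst F (e (dm l)))" using J_dec[OF qF l] .
      also have "J F l = cp (J F k) (J F f)" using J_cp[OF qF k fM] cdf l_eq by simp
      finally show ?thesis using dmf by simp
    qed
    have Kk: "fst K k = cp (J F k) (fst K (e (cd f)))"
      using J_dec[OF qK k] JJ cdf by simp
    define X where "X = cd (fst F (e (cd f)))"
    define Y where "Y = cd (fst F (e (dm f)))"
    have m: "J F k \<in> M" "J F f \<in> M" "fst K (e (cd f)) \<in> M" "fst F (e (dm f)) \<in> M"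
      using J_props[OF qF k] J_props[OF qF fM] oF fM by simp_all
    have d: "dm (J F k) = X" "cd (fst K (e (cd f))) = X" "cd (J F f) = X" "dm (J F f) = Y"
      "cd (fst F (e (dm f))) = Y"
      unfolding X_def Y_def using J_props[OF qF k] J_props[OF qF fM] cdFK[of "e (cd f)"] fM k cdf by simp_all
    show ?thesis unfolding v_def Fl Kk using m d by simp
  qed
  have vM: "v f \<in> M" if "f \<in> M" for f
    unfolding v_def using that oF J_props[OF qF that] cdFK[of "e (cd f)"] by simp
  have hv: "snd (hh F K) ((k, l), (i, j)) = ((if j = 0 then fst F else fst K) k, (if i = 0 then fst F else fst K) l)"
    if "k \<in> M" "l \<in> M" "cd k = cd l" "(i, j) \<in> {(0::nat, 0::nat), (1, 1), (0, 1)}" for k l i j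
    using that unfolding hh_def by auto
  have blocks: "\<exists>\<tau>\<in>snd A. snd (hh F K) ` \<sigma> \<subseteq> \<tau>" if "\<sigma> \<in> snd (prod_qs A qsI)" for \<sigma>
  proof -
    from that obtain f c where \<sigma>: "\<sigma> = B f \<times> {c}" and fM: "f \<in> M"
      and c: "c \<in> {(0::nat, 0::nat), (1, 1), (0, 1)}" by auto
    have Bsub: "B f \<subseteq> cmor SC" unfolding B_def by auto
    have img: "snd (hh F K) ` \<sigma> = (\<lambda>(k, l). ((if snd c = 0 then fst F else fst K) k,
         (if fst c = 0 then fst F else fst K) l)) ` B f"
    proof -
      have "snd (hh F K) ` \<sigma> = (\<lambda>p. snd (hh F K) (p, c)) ` B f" unfolding \<sigma> by auto
      also have "\<dots> = (\<lambda>(k, l). ((if snd c = 0 then fst F else fst K) k,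
         (if fst c = 0 then fst F else fst K) l)) ` B f"
      proof (rule image_cong[OF refl])
        fix p assume "p \<in> B f"
        then obtain k l where p: "p = (k, l)" "k \<in> M" "l \<in> M" "cd k = cd l" unfolding B_def by auto
        obtain i j where cij: "c = (i, j)" by (cases c)
        show "snd (hh F K) (p, c) = (\<lambda>(k, l). ((if snd c = 0 then fst F else fst K) k,
         (if fst c = 0 then fst F else fst K) l)) p"
          using hv[OF p(2-4), of i j] c unfolding p(1) cij by simp
      qed
      finally show ?thesis .
    qed
    have imgF: "snd X ` B f = (\<lambda>(k, l). (fst X k, fst X l)) ` B f" if qX: "qs_mor A A X" for X
    proof (rule image_cong[OF refl])
      fix p assume "p \<in> B f"
      then obtain k l where p: "p = (k, l)" "k \<in> M" "l \<in> M" "cd k = cd l" unfolding B_def by auto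
      show "snd X p = (\<lambda>(k, l). (fst X k, fst X l)) p" using qm_mor(1)[OF qX p(2-4)] unfolding p(1) by simp
    qed
    consider "c = (0, 0)" | "c = (1, 1)" | "c = (0, 1)" using c by auto
    then show ?thesis
    proof cases
      case 1
      have "B f \<in> snd A" using fM by auto
      then obtain \<tau> where "\<tau> \<in> snd A" "snd F ` B f \<subseteq> \<tau>" using qm_blk0[OF qF] by blast
      moreover have "snd F ` B f = snd (hh F K) ` \<sigma>" unfolding img 1 imgF[OF qF] by simp
      ultimately show ?thesis by auto
    next
      case 2
      have "B f \<in> snd A" using fM by auto
      then obtain \<tau> where "\<tau> \<in> snd A" "snd K ` B f \<subseteq> \<tau>" using qm_blk0[OF qK] by blast
      moreover have "snd K ` B f = snd (hh F K) ` \<sigma>" unfolding img 2 imgF[OF qK] by simp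
      ultimately show ?thesis by auto
    next
      case 3
      have "B (v f) \<in> snd A" using vM fM by auto
      moreover have "snd (hh F K) ` \<sigma> \<subseteq> B (v f)"
      proof
        fix y assume "y \<in> snd (hh F K) ` \<sigma>"
        then obtain k l where kl: "(k, l) \<in> B f" and y: "y = (fst K k, fst F l)" unfolding img 3 by auto
        have k: "k \<in> M" "l \<in> M" "cd k = cd l" using kl unfolding B_def by auto
        have "cd (fst K k) = cd (fst F l)" using cdFK[OF k(1)] qm_mor(2)[OF qF k] by simp
        then show "y \<in> B (v f)" unfolding y B_def using key[OF kl] oF[OF k(1)] oF[OF k(2)] by simp
      qed
      ultimately show ?thesis by blast
    qed
  qed
  have qH: "qs_mor (prod_qs A qsI) A (hh F K)"
    unfolding qs_mor_def using hh_fun[OF qF qK JJ] blocks by simp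
  have e1: "\<forall>a\<in>cobj (fst A). fst (hh F K) (a, 0) = fst F a \<and> fst (hh F K) (a, 1) = fst K a"
    unfolding hh_def by simp
  have e2: "\<forall>f\<in>cmor (fst A). snd (hh F K) (f, (0, 0)) = snd F f \<and> snd (hh F K) (f, (1, 1)) = snd K f"
  proof
    fix f assume "f \<in> cmor (fst A)"
    then obtain k l where f: "f = (k, l)" "k \<in> M" "l \<in> M" "cd k = cd l" by auto
    show "snd (hh F K) (f, (0, 0)) = snd F f \<and> snd (hh F K) (f, (1, 1)) = snd K f"
      using hv[OF f(2-4)] qm_mor(1)[OF qF f(2-4)] qm_mor(1)[OF qK f(2-4)] unfolding f(1) by simp
  qed
  show ?thesis unfolding htpy_def using qF qK qH e1 e2 by blast
qed

lemma htpc_iff: "htpc A A F K \<longleftrightarrow> qs_mor A A F \<and> qs_mor A A K \<and> J F = J K"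
proof
  assume h: "htpc A A F K"
  have "(F, K) \<in> (htpy_sim A A)\<^sup>*" using h unfolding htpc_def by blast
  hence "J F = J K"
  proof (induction rule: rtrancl_induct)
    case base then show ?case by simp
  next
    case (step y z)
    then have "htpy A A y z \<or> htpy A A z y" unfolding htpy_sim_def by simp
    then have "J y = J z" using htpy_J by metis
    then show ?case using step by simp
  qed
  then show "qs_mor A A F \<and> qs_mor A A K \<and> J F = J K" using h unfolding htpc_def by blast
next
  assume h: "qs_mor A A F \<and> qs_mor A A K \<and> J F = J K"
  hence "htpy A A F K" using J_htpy by blast
  hence "(F, K) \<in> htpy_sim A A" unfolding htpy_sim_def by simp
  then show "htpc A A F K" unfolding htpc_def using h by blast
qed

lemma SC_cat: "is_cat SC"
  unfolding is_cat_def by auto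

lemma qm_fcomp: assumes qF: "qs_mor A A F" and qK: "qs_mor A A K"
  shows "qs_mor A A (fcomp SC F K)"
proof -
  have f: "is_functor SC SC (fcomp SC F K)" using fun_fcomp[OF _ _ SC_cat] qm_fun[OF qF] qm_fun[OF qK] by simp
  have "\<exists>\<tau>\<in>snd A. snd (fcomp SC F K) ` \<sigma> \<subseteq> \<tau>" if s: "\<sigma> \<in> snd A" for \<sigma>
  proof -
    obtain \<tau> where t: "\<tau> \<in> snd A" "snd K ` \<sigma> \<subseteq> \<tau>" using qm_blk0[OF qK s] by blast
    obtain \<rho> where r: "\<rho> \<in> snd A" "snd F ` \<tau> \<subseteq> \<rho>" using qm_blk0[OF qF t(1)] by blast
    have sub: "\<sigma> \<subseteq> cmor SC" using s unfolding A_simps B_def by auto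
    have "snd (fcomp SC F K) ` \<sigma> \<subseteq> \<rho>"
    proof
      fix y assume "y \<in> snd (fcomp SC F K) ` \<sigma>"
      then obtain m where m: "m \<in> \<sigma>" "y = snd (fcomp SC F K) m" by blast
      have "y = snd F (snd K m)" using m sub unfolding fcomp_def by auto
      thus "y \<in> \<rho>" using m t r by blast
    qed
    thus ?thesis using r by blast
  qed
  thus ?thesis unfolding qs_mor_def using f by simp
qed

lemma fcomp_fst: "a \<in> M \<Longrightarrow> fst (fcomp SC F K) a = fst F (fst K a)"
  unfolding fcomp_def by simp

lemma J_fcomp: assumes qF: "qs_mor A A F" and qK: "qs_mor A A K"
  shows "J (fcomp SC F K) = compose M (J F) (J K)"
proof (rule extensionalityI[OF J_ext])
  show "compose M (J F) (J K) \<in> extensional M" by (simp add: compose_def)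
  fix a assume a: "a \<in> M"
  define x where "x = e (dm a)"
  have x: "x \<in> M" "dm x = dm a" unfolding x_def using a by simp_all
  have Ka: "fst K a \<in> M" "fst K x \<in> M" using qm_obj[OF qK] a x by auto
  have dK: "dm (fst K a) = dm (fst K x)" using qm_dm[OF qK a] unfolding x_def .
  define d where "d = e (dm (fst K a))"
  have d: "d \<in> M" unfolding d_def using Ka by simp
  have FKa: "fst F (fst K a) \<in> M" "fst F (fst K x) \<in> M" "fst F d \<in> M" using qm_obj[OF qF] Ka d by auto
  have dF1: "dm (fst F (fst K a)) = dm (fst F d)" using qm_dm[OF qF Ka(1)] unfolding d_def .
  have dF2: "dm (fst F (fst K x)) = dm (fst F d)" using qm_dm[OF qF Ka(2)] dK unfolding d_def by simp
  have cK: "cd (fst F (fst K x)) = cd (J F (fst K x))" using J_cd[OF qF Ka(2)] by simp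
  have lhs: "J (fcomp SC F K) a = cp (fst F (fst K a)) (iv (fst F (fst K x)))"
    using J_val[OF a] a x unfolding x_def by (simp add: fcomp_def)
  have "J K a = cp (fst K a) (iv (fst K x))" using J_val[OF a] unfolding x_def by simp
  hence "J F (J K a) = cp (J F (fst K a)) (J F (iv (fst K x)))"
    using J_cp[OF qF Ka(1)] Ka dK by simp
  also have "\<dots> = cp (J F (fst K a)) (iv (J F (fst K x)))" using J_iv[OF qF Ka(2)] by simp
  also have "\<dots> = cp (cp (fst F (fst K a)) (iv (fst F d))) (iv (cp (fst F (fst K x)) (iv (fst F d))))"
    using J_val[OF Ka(1)] J_val[OF Ka(2)] dK unfolding d_def by simp
  also have "\<dots> = cp (fst F (fst K a)) (iv (fst F (fst K x)))"
    using FKa dF1 dF2 by simp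
  finally show "J (fcomp SC F K) a = compose M (J F) (J K) a" using lhs a by (simp add: compose_def)
qed

lemma qm_fid: "qs_mor A A (fid SC)"
proof -
  have "is_functor SC SC (fid SC)" unfolding is_functor_def fid_def by auto
  moreover have "snd (fid SC) ` \<sigma> \<subseteq> \<sigma>" if "\<sigma> \<in> snd A" for \<sigma>
  proof -
    have "\<sigma> \<subseteq> cmor SC" using that unfolding A_simps B_def by auto
    then show ?thesis unfolding fid_def by (auto simp del: SC_simps)
  qed
  ultimately show ?thesis unfolding qs_mor_def A_simps(1) by blast
qed

lemma J_fid: "J (fid SC) = (\<lambda>a\<in>M. a)"
proof (rule extensionalityI[OF J_ext])
  show "(\<lambda>a\<in>M. a) \<in> extensional M" by simp
  fix a assume "a \<in> M" thus "J (fid SC) a = (\<lambda>a\<in>M. a) a" by (simp add: J_val fid_def)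
qed

section \<open>functors of G\<close>

lemma fu_mor: assumes "is_functor G G u" "a \<in> M"
  shows "snd u a \<in> M" "dm (snd u a) = fst u (dm a)" "cd (snd u a) = fst u (cd a)"
  using fun_mor[OF assms] fun_dom[OF assms] fun_cod[OF assms] by simp_all

lemma fu_ob: "is_functor G G u \<Longrightarrow> x \<in> Ob \<Longrightarrow> fst u x \<in> Ob" by (rule fun_obj)

lemma fu_e: "is_functor G G u \<Longrightarrow> x \<in> Ob \<Longrightarrow> snd u (e x) = e (fst u x)" by (rule fun_id)

lemma fu_cp: "is_functor G G u \<Longrightarrow> f \<in> M \<Longrightarrow> g \<in> M \<Longrightarrow> cd f = dm g \<Longrightarrow> snd u (cp g f) = cp (snd u g) (snd u f)"
  by (rule fun_comp)

lemma fu_iv: assumes u: "is_functor G G u" and a: "a \<in> M"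
  shows "snd u (iv a) = iv (snd u a)"
proof (rule iv_unique)
  show "snd u (iv a) \<in> M" "snd u a \<in> M" using fu_mor[OF u] a by simp_all
  show "dm (snd u (iv a)) = cd (snd u a)" using fu_mor[OF u] a by simp
  have "snd u (cp (iv a) a) = cp (snd u (iv a)) (snd u a)" by (rule fu_cp[OF u]) (use a in simp_all)
  hence "cp (snd u (iv a)) (snd u a) = snd u (cp (iv a) a)" by simp
  also have "\<dots> = e (dm (snd u a))" using fu_e[OF u] fu_mor[OF u] a by simp
  finally show "cp (snd u (iv a)) (snd u a) = e (dm (snd u a))" .
qed

lemma fu_fst: assumes u: "is_functor G G u" and x: "x \<in> Ob" shows "fst u x = dm (snd u (e x))"
  using fu_e[OF u x] fu_ob[OF u x] by simp

lemma Sf_fst: "a \<in> M \<Longrightarrow> fst (Stilde_fun G u) a = snd u a"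
  unfolding Stilde_fun_def Stilde_cat_def by simp

lemma Sf_qm: assumes u: "is_functor G G u" shows "qs_mor A A (Stilde_fun G u)"
proof -
  have sm: "snd (Stilde_fun G u) (k, l) = (snd u k, snd u l)" if "k \<in> M" "l \<in> M" "cd k = cd l" for k l
    using that unfolding Stilde_fun_def Stilde_cat_def by simp
  have f: "is_functor SC SC (Stilde_fun G u)"
    unfolding is_functor_def
  proof (intro conjI ballI impI)
    show "fst (Stilde_fun G u) a \<in> cobj SC" if "a \<in> cobj SC" for a
      using that Sf_fst fu_mor[OF u] by simp
    fix m assume m: "m \<in> cmor SC"
    then obtain k l where kl: "m = (k, l)" "k \<in> M" "l \<in> M" "cd k = cd l" by auto
    show "snd (Stilde_fun G u) m \<in> cmor SC" "cdom SC (snd (Stilde_fun G u) m) = fst (Stilde_fun G u) (cdom SC m)"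
      "ccod SC (snd (Stilde_fun G u) m) = fst (Stilde_fun G u) (ccod SC m)"
      using sm[OF kl(2-4)] fu_mor[OF u] kl Sf_fst by simp_all
  next
    fix a assume "a \<in> cobj SC"
    then show "snd (Stilde_fun G u) (cid SC a) = cid SC (fst (Stilde_fun G u) a)"
      using sm Sf_fst by simp
  next
    fix f g assume f: "f \<in> cmor SC" and g: "g \<in> cmor SC" and fg: "ccod SC f = cdom SC g"
    obtain k l where kl: "g = (k, l)" "k \<in> M" "l \<in> M" "cd k = cd l" using g by auto
    obtain k' l' where kl': "f = (k', l')" "k' \<in> M" "l' \<in> M" "cd k' = cd l'" using f by auto
    have "k' = l" using fg kl kl' by simp
    then show "snd (Stilde_fun G u) (ccomp SC g f) = ccomp SC (snd (Stilde_fun G u) g) (snd (Stilde_fun G u) f)"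
      using sm kl kl' by simp
  next
    show "fst (Stilde_fun G u) \<in> extensional (cobj SC)" "snd (Stilde_fun G u) \<in> extensional (cmor SC)"
      unfolding Stilde_fun_def by simp_all
  qed
  have "\<exists>\<tau>\<in>snd A. snd (Stilde_fun G u) ` \<sigma> \<subseteq> \<tau>" if s: "\<sigma> \<in> snd A" for \<sigma>
  proof -
    obtain f where f: "\<sigma> = B f" "f \<in> M" using s by auto
    have "B (snd u f) \<in> snd A" using fu_mor[OF u f(2)] by auto
    moreover have "snd (Stilde_fun G u) ` \<sigma> \<subseteq> B (snd u f)"
    proof
      fix y assume "y \<in> snd (Stilde_fun G u) ` \<sigma>"
      then obtain k l where kl: "(k, l) \<in> B f" "y = snd (Stilde_fun G u) (k, l)" using f by auto
      have k: "k \<in> M" "l \<in> M" "cd k = cd l" "cp (iv k) l = f" using kl unfolding B_def by auto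
      have "cp (iv (snd u k)) (snd u l) = snd u f"
        using fu_iv[OF u k(1)] fu_cp[OF u, of l "iv k"] k by simp
      then show "y \<in> B (snd u f)" using kl(2) sm[OF k(1-3)] fu_mor[OF u] k unfolding B_def by simp
    qed
    ultimately show ?thesis by blast
  qed
  thus ?thesis unfolding qs_mor_def using f by simp
qed

lemma J_Sf: assumes u: "is_functor G G u" shows "J (Stilde_fun G u) = snd u"
proof (rule extensionalityI[OF J_ext])
  show "snd u \<in> extensional M" using fun_ext(2)[OF u] .
  fix a assume a: "a \<in> M"
  show "J (Stilde_fun G u) a = snd u a"
    using a Sf_fst fu_e[OF u] fu_mor[OF u a] fu_ob[OF u dm_ob[OF a]] by (simp add: J_val)
qed

lemma Sf_fcomp: assumes u: "is_functor G G u" and v: "is_functor G G v"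
  shows "Stilde_fun G (fcomp G u v) = fcomp SC (Stilde_fun G u) (Stilde_fun G v)"
proof -
  have "fst (Stilde_fun G (fcomp G u v)) = fst (fcomp SC (Stilde_fun G u) (Stilde_fun G v))"
    unfolding Stilde_fun_def fcomp_def Stilde_cat_def using fu_mor[OF v] by (auto intro!: restrict_ext)
  moreover have "snd (Stilde_fun G (fcomp G u v)) = snd (fcomp SC (Stilde_fun G u) (Stilde_fun G v))"
    unfolding Stilde_fun_def fcomp_def Stilde_cat_def using fu_mor[OF v] by (auto intro!: restrict_ext)
  ultimately show ?thesis by (simp add: prod_eq_iff)
qed

lemma Sf_fid: "Stilde_fun G (fid G) = fid SC"
  unfolding Stilde_fun_def fid_def Stilde_cat_def by (auto intro!: restrict_ext simp: prod_eq_iff)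

lemma qa_qm: "qs_aut A F \<Longrightarrow> qs_mor A A F" unfolding qs_aut_def A_simps(1) by blast

lemma hcls_char: "qs_mor A A F \<Longrightarrow> hcls A F = {K. qs_mor A A K \<and> J K = J F}"
  unfolding hcls_def htpc_iff by auto

lemma acls_char: "qs_mor A A F \<Longrightarrow> acls A F = {K. qs_aut A K \<and> J K = J F}"
  unfolding acls_def htpc_iff using qa_qm by auto

lemma hcls_eq: "qs_mor A A F \<Longrightarrow> qs_mor A A K \<Longrightarrow> hcls A F = hcls A K \<longleftrightarrow> J F = J K"
  by (auto simp: hcls_char)

lemma acls_eq: "qs_aut A F \<Longrightarrow> qs_aut A K \<Longrightarrow> acls A F = acls A K \<longleftrightarrow> J F = J K"
  using qa_qm by (auto simp: acls_char)

lemma some_hcls: assumes "qs_mor A A F"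
  shows "qs_mor A A (SOME X. X \<in> hcls A F) \<and> J (SOME X. X \<in> hcls A F) = J F"
proof -
  have "F \<in> hcls A F" using assms hcls_char by simp
  hence "(SOME X. X \<in> hcls A F) \<in> hcls A F" by (rule someI)
  thus ?thesis using assms hcls_char by simp
qed

lemma some_acls: assumes "qs_aut A F"
  shows "qs_aut A (SOME X. X \<in> acls A F) \<and> J (SOME X. X \<in> acls A F) = J F"
proof -
  have "F \<in> acls A F" using assms acls_char qa_qm by simp
  hence "(SOME X. X \<in> acls A F) \<in> acls A F" by (rule someI)
  thus ?thesis using assms acls_char qa_qm by simp
qed

lemma J_cong: assumes "qs_mor A A F" "qs_mor A A F'" "qs_mor A A K" "qs_mor A A K'" "J F = J F'" "J K = J K'"
  shows "J (fcomp SC F K) = J (fcomp SC F' K')"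
  using assms J_fcomp by simp

lemma hmult: assumes "qs_mor A A F" "qs_mor A A K"
  shows "hcls A F \<otimes>\<^bsub>haut A\<^esub> hcls A K = hcls A (fcomp SC F K)"
proof -
  let ?F = "SOME X. X \<in> hcls A F" and ?K = "SOME X. X \<in> hcls A K"
  have "J (fcomp SC ?F ?K) = J (fcomp SC F K)"
    using J_cong some_hcls assms by blast
  moreover have "qs_mor A A (fcomp SC ?F ?K)" "qs_mor A A (fcomp SC F K)"
    using qm_fcomp some_hcls assms by blast+
  ultimately show ?thesis unfolding haut_def using hcls_eq by simp
qed

lemma qa_fun: "qs_aut A F \<Longrightarrow> is_functor SC SC F" using qm_fun[OF qa_qm] by simp

lemma qa_fcomp: assumes F: "qs_aut A F" and K: "qs_aut A K" shows "qs_aut A (fcomp SC F K)"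
proof -
  obtain F' where F': "qs_mor A A F'" "fcomp SC F' F = fid SC" "fcomp SC F F' = fid SC"
    using F unfolding qs_aut_def A_simps(1) by blast
  obtain K' where K': "qs_mor A A K'" "fcomp SC K' K = fid SC" "fcomp SC K K' = fid SC"
    using K unfolding qs_aut_def A_simps(1) by blast
  have fF: "is_functor SC SC F" "is_functor SC SC F'" "is_functor SC SC K" "is_functor SC SC K'"
    using qa_fun[OF F] qa_fun[OF K] qm_fun[OF F'(1), unfolded A_simps] qm_fun[OF K'(1), unfolded A_simps] by auto
  have c: "is_functor SC SC (fcomp SC F K)" "is_functor SC SC (fcomp SC K' F')"
    using fun_fcomp[OF _ _ SC_cat] fF by blast+
  have "fcomp SC (fcomp SC K' F') (fcomp SC F K) = fcomp SC K' (fcomp SC F' (fcomp SC F K))"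
    by (rule fcomp_assoc[OF fF(2) c(1)])
  also have "fcomp SC F' (fcomp SC F K) = fcomp SC (fcomp SC F' F) K" by (rule fcomp_assoc[OF fF(1) fF(3), symmetric])
  also have "\<dots> = K" using F' fF fcomp_fid_l by simp
  finally have 1: "fcomp SC (fcomp SC K' F') (fcomp SC F K) = fid SC" using K' by simp
  have "fcomp SC (fcomp SC F K) (fcomp SC K' F') = fcomp SC F (fcomp SC K (fcomp SC K' F'))"
    by (rule fcomp_assoc[OF fF(3) c(2)])
  also have "fcomp SC K (fcomp SC K' F') = fcomp SC (fcomp SC K K') F'" by (rule fcomp_assoc[OF fF(4) fF(2), symmetric])
  also have "\<dots> = F'" using K' fF fcomp_fid_l by simp
  finally have 2: "fcomp SC (fcomp SC F K) (fcomp SC K' F') = fid SC" using F' by simp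
  have "qs_mor A A (fcomp SC F K)" "qs_mor A A (fcomp SC K' F')"
    using qm_fcomp[OF qa_qm[OF F] qa_qm[OF K]] qm_fcomp[OF K'(1) F'(1)] by blast+
  thus ?thesis unfolding qs_aut_def A_simps(1) using 1 2 by blast
qed

lemma qa_fid: "qs_aut A (fid SC)"
  unfolding qs_aut_def A_simps(1) using qm_fid fcomp_fid_l[OF fun_fid[OF SC_cat]] by blast

lemma amult: assumes "qs_aut A F" "qs_aut A K"
  shows "acls A F \<otimes>\<^bsub>hAut A\<^esub> acls A K = acls A (fcomp SC F K)"
proof -
  let ?F = "SOME X. X \<in> acls A F" and ?K = "SOME X. X \<in> acls A K"
  have "J (fcomp SC ?F ?K) = J (fcomp SC F K)"
    using J_cong some_acls assms qa_qm by meson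
  moreover have "qs_aut A (fcomp SC ?F ?K)" "qs_aut A (fcomp SC F K)"
    using qa_fcomp some_acls assms by blast+
  ultimately show ?thesis unfolding hAut_def using acls_eq by simp
qed

lemma sh_iff: "self_heq A F \<longleftrightarrow> qs_mor A A F \<and> (\<exists>K. qs_mor A A K \<and>
    J (fcomp SC F K) = J (fid SC) \<and> J (fcomp SC K F) = J (fid SC))"
proof
  assume "self_heq A F"
  then obtain K where "qs_mor A A F" "qs_mor A A K" "htpc A A (fcomp SC F K) (fid SC)"
    "htpc A A (fcomp SC K F) (fid SC)" unfolding self_heq_def A_simps(1) by blast
  then show "qs_mor A A F \<and> (\<exists>K. qs_mor A A K \<and>
    J (fcomp SC F K) = J (fid SC) \<and> J (fcomp SC K F) = J (fid SC))" unfolding htpc_iff by blast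
next
  assume "qs_mor A A F \<and> (\<exists>K. qs_mor A A K \<and>
    J (fcomp SC F K) = J (fid SC) \<and> J (fcomp SC K F) = J (fid SC))"
  then obtain K where K: "qs_mor A A F" "qs_mor A A K" "J (fcomp SC F K) = J (fid SC)" "J (fcomp SC K F) = J (fid SC)"
    by blast
  have "htpc A A (fcomp SC F K) (fid SC)" "htpc A A (fcomp SC K F) (fid SC)"
    unfolding htpc_iff using K qm_fcomp[OF K(1) K(2)] qm_fcomp[OF K(2) K(1)] qm_fid by blast+
  then show "self_heq A F" unfolding self_heq_def A_simps(1) using K by blast
qed

lemma haut_carrier: "carrier (haut A) = {hcls A F | F. self_heq A F}" unfolding haut_def by simp
lemma haut_one: "\<one>\<^bsub>haut A\<^esub> = hcls A (fid SC)" unfolding haut_def by simp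
lemma hAut_carrier: "carrier (hAut A) = {acls A F | F. qs_aut A F}" unfolding hAut_def by simp
lemma hAut_one: "\<one>\<^bsub>hAut A\<^esub> = acls A (fid SC)" unfolding hAut_def by simp

lemma haut_group: "group (haut A)"
proof (rule groupI)
  fix x y assume x: "x \<in> carrier (haut A)" and y: "y \<in> carrier (haut A)"
  obtain F where F: "x = hcls A F" "self_heq A F" using x unfolding haut_carrier by blast
  obtain K where K: "y = hcls A K" "self_heq A K" using y unfolding haut_carrier by blast
  obtain F' where F': "qs_mor A A F'" "J (fcomp SC F F') = J (fid SC)" "J (fcomp SC F' F) = J (fid SC)"
    and qF: "qs_mor A A F" using F(2) sh_iff by blast
  obtain K' where K': "qs_mor A A K'" "J (fcomp SC K K') = J (fid SC)" "J (fcomp SC K' K) = J (fid SC)"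
    and qK: "qs_mor A A K" using K(2) sh_iff by blast
  have fF: "is_functor SC SC F" "is_functor SC SC F'" "is_functor SC SC K" "is_functor SC SC K'"
    using qm_fun[OF qF, unfolded A_simps] qm_fun[OF F'(1), unfolded A_simps]
      qm_fun[OF qK, unfolded A_simps] qm_fun[OF K'(1), unfolded A_simps] by auto
  have c: "is_functor SC SC (fcomp SC K' F')" "is_functor SC SC (fcomp SC F' F)"
    using fun_fcomp[OF _ _ SC_cat] fF by blast+
  have "fcomp SC (fcomp SC F K) (fcomp SC K' F') = fcomp SC F (fcomp SC K (fcomp SC K' F'))"
    by (rule fcomp_assoc[OF fF(3) c(1)])
  also have "fcomp SC K (fcomp SC K' F') = fcomp SC (fcomp SC K K') F'" by (rule fcomp_assoc[OF fF(4) fF(2), symmetric])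
  finally have "J (fcomp SC (fcomp SC F K) (fcomp SC K' F')) = J (fcomp SC F (fcomp SC (fcomp SC K K') F'))"
    by simp
  also have "\<dots> = J (fcomp SC F (fcomp SC (fid SC) F'))"
    by (rule J_cong[OF qF qF qm_fcomp[OF qm_fcomp[OF qK K'(1)] F'(1)] qm_fcomp[OF qm_fid F'(1)] refl
        J_cong[OF qm_fcomp[OF qK K'(1)] qm_fid F'(1) F'(1) K'(2) refl]])
  also have "\<dots> = J (fid SC)" using fcomp_fid_l[OF fF(2)] F'(2) by simp
  finally have 1: "J (fcomp SC (fcomp SC F K) (fcomp SC K' F')) = J (fid SC)" .
  have c2: "is_functor SC SC (fcomp SC F K)"
    using fun_fcomp[OF _ _ SC_cat] fF by blast
  have "fcomp SC (fcomp SC K' F') (fcomp SC F K) = fcomp SC K' (fcomp SC F' (fcomp SC F K))"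
    by (rule fcomp_assoc[OF fF(2) c2])
  also have "fcomp SC F' (fcomp SC F K) = fcomp SC (fcomp SC F' F) K" by (rule fcomp_assoc[OF fF(1) fF(3), symmetric])
  finally have "J (fcomp SC (fcomp SC K' F') (fcomp SC F K)) = J (fcomp SC K' (fcomp SC (fcomp SC F' F) K))"
    by simp
  also have "\<dots> = J (fcomp SC K' (fcomp SC (fid SC) K))"
    by (rule J_cong[OF K'(1) K'(1) qm_fcomp[OF qm_fcomp[OF F'(1) qF] qK] qm_fcomp[OF qm_fid qK] refl
        J_cong[OF qm_fcomp[OF F'(1) qF] qm_fid qK qK F'(3) refl]])
  also have "\<dots> = J (fid SC)" using fcomp_fid_l[OF fF(3)] K'(3) by simp
  finally have 2: "J (fcomp SC (fcomp SC K' F') (fcomp SC F K)) = J (fid SC)" .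
  have "self_heq A (fcomp SC F K)" unfolding sh_iff
    using 1 2 qm_fcomp[OF qF qK] qm_fcomp[OF K'(1) F'(1)] by blast
  moreover have "x \<otimes>\<^bsub>haut A\<^esub> y = hcls A (fcomp SC F K)" using hmult[OF qF qK] F(1) K(1) by simp
  ultimately show "x \<otimes>\<^bsub>haut A\<^esub> y \<in> carrier (haut A)" unfolding haut_carrier by blast
next
  have "self_heq A (fid SC)" unfolding sh_iff using qm_fid fcomp_fid_l[OF fun_fid[OF SC_cat]] by metis
  thus "\<one>\<^bsub>haut A\<^esub> \<in> carrier (haut A)" unfolding haut_carrier haut_one by blast
next
  fix x y z assume x: "x \<in> carrier (haut A)" and y: "y \<in> carrier (haut A)" and z: "z \<in> carrier (haut A)"
  obtain F where F: "x = hcls A F" "qs_mor A A F" using x sh_iff unfolding haut_carrier by blast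
  obtain K where K: "y = hcls A K" "qs_mor A A K" using y sh_iff unfolding haut_carrier by blast
  obtain L where L: "z = hcls A L" "qs_mor A A L" using z sh_iff unfolding haut_carrier by blast
  have "x \<otimes>\<^bsub>haut A\<^esub> y \<otimes>\<^bsub>haut A\<^esub> z = hcls A (fcomp SC (fcomp SC F K) L)"
    using hmult qm_fcomp F K L by simp
  also have "\<dots> = hcls A (fcomp SC F (fcomp SC K L))"
    by (rule arg_cong[where f="hcls A"], rule fcomp_assoc[OF qm_fun[OF K(2), unfolded A_simps] qm_fun[OF L(2), unfolded A_simps]])
  also have "\<dots> = x \<otimes>\<^bsub>haut A\<^esub> (y \<otimes>\<^bsub>haut A\<^esub> z)"
    using hmult qm_fcomp F K L by simp
  finally show "x \<otimes>\<^bsub>haut A\<^esub> y \<otimes>\<^bsub>haut A\<^esub> z = x \<otimes>\<^bsub>haut A\<^esub> (y \<otimes>\<^bsub>haut A\<^esub> z)" .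
next
  fix x assume x: "x \<in> carrier (haut A)"
  obtain F where F: "x = hcls A F" "qs_mor A A F" using x sh_iff unfolding haut_carrier by blast
  have "\<one>\<^bsub>haut A\<^esub> = hcls A (fid SC)" unfolding haut_def by simp
  hence "\<one>\<^bsub>haut A\<^esub> \<otimes>\<^bsub>haut A\<^esub> x = hcls A (fcomp SC (fid SC) F)"
    using hmult qm_fid F by simp
  also have "\<dots> = x" using fcomp_fid_l[OF qm_fun[OF F(2), unfolded A_simps]] F by simp
  finally show "\<one>\<^bsub>haut A\<^esub> \<otimes>\<^bsub>haut A\<^esub> x = x" .
next
  fix x assume x: "x \<in> carrier (haut A)"
  obtain F where F: "x = hcls A F" "self_heq A F" using x unfolding haut_carrier by blast
  obtain F' where F': "qs_mor A A F'" "J (fcomp SC F F') = J (fid SC)" "J (fcomp SC F' F) = J (fid SC)"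
    and qF: "qs_mor A A F" using F(2) sh_iff by blast
  have "self_heq A F'" unfolding sh_iff using F' qF by blast
  hence "hcls A F' \<in> carrier (haut A)" unfolding haut_carrier by blast
  moreover have "hcls A F' \<otimes>\<^bsub>haut A\<^esub> x = \<one>\<^bsub>haut A\<^esub>"
  proof -
    have "hcls A F' \<otimes>\<^bsub>haut A\<^esub> x = hcls A (fcomp SC F' F)" using hmult[OF F'(1) qF] F(1) by simp
    also have "\<dots> = hcls A (fid SC)" using hcls_eq[OF qm_fcomp[OF F'(1) qF] qm_fid] F'(3) by simp
    finally show ?thesis unfolding haut_one .
  qed
  ultimately show "\<exists>y\<in>carrier (haut A). y \<otimes>\<^bsub>haut A\<^esub> x = \<one>\<^bsub>haut A\<^esub>" by blast
qed

lemma hAut_group: "group (hAut A)"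
proof (rule groupI)
  fix x y assume x: "x \<in> carrier (hAut A)" and y: "y \<in> carrier (hAut A)"
  obtain F where F: "x = acls A F" "qs_aut A F" using x unfolding hAut_carrier by blast
  obtain K where K: "y = acls A K" "qs_aut A K" using y unfolding hAut_carrier by blast
  have "x \<otimes>\<^bsub>hAut A\<^esub> y = acls A (fcomp SC F K)" using amult[OF F(2) K(2)] F(1) K(1) by simp
  thus "x \<otimes>\<^bsub>hAut A\<^esub> y \<in> carrier (hAut A)" using qa_fcomp[OF F(2) K(2)] unfolding hAut_carrier by blast
next
  show "\<one>\<^bsub>hAut A\<^esub> \<in> carrier (hAut A)" using qa_fid unfolding hAut_carrier hAut_one by blast
next
  fix x y z assume x: "x \<in> carrier (hAut A)" and y: "y \<in> carrier (hAut A)" and z: "z \<in> carrier (hAut A)"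
  obtain F where F: "x = acls A F" "qs_aut A F" using x unfolding hAut_carrier by blast
  obtain K where K: "y = acls A K" "qs_aut A K" using y unfolding hAut_carrier by blast
  obtain L where L: "z = acls A L" "qs_aut A L" using z unfolding hAut_carrier by blast
  have "x \<otimes>\<^bsub>hAut A\<^esub> y \<otimes>\<^bsub>hAut A\<^esub> z = acls A (fcomp SC (fcomp SC F K) L)"
    using amult qa_fcomp F K L by simp
  also have "\<dots> = acls A (fcomp SC F (fcomp SC K L))"
    by (rule arg_cong[where f="acls A"], rule fcomp_assoc[OF qa_fun[OF K(2)] qa_fun[OF L(2)]])
  also have "\<dots> = x \<otimes>\<^bsub>hAut A\<^esub> (y \<otimes>\<^bsub>hAut A\<^esub> z)"
    using amult qa_fcomp F K L by simp
  finally show "x \<otimes>\<^bsub>hAut A\<^esub> y \<otimes>\<^bsub>hAut A\<^esub> z = x \<otimes>\<^bsub>hAut A\<^esub> (y \<otimes>\<^bsub>hAut A\<^esub> z)" .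
next
  fix x assume x: "x \<in> carrier (hAut A)"
  obtain F where F: "x = acls A F" "qs_aut A F" using x unfolding hAut_carrier by blast
  have "\<one>\<^bsub>hAut A\<^esub> = acls A (fid SC)" unfolding hAut_def by simp
  hence "\<one>\<^bsub>hAut A\<^esub> \<otimes>\<^bsub>hAut A\<^esub> x = acls A (fcomp SC (fid SC) F)"
    using amult qa_fid F by simp
  also have "\<dots> = x" using fcomp_fid_l[OF qa_fun[OF F(2)]] F by simp
  finally show "\<one>\<^bsub>hAut A\<^esub> \<otimes>\<^bsub>hAut A\<^esub> x = x" .
next
  fix x assume x: "x \<in> carrier (hAut A)"
  obtain F where F: "x = acls A F" "qs_aut A F" using x unfolding hAut_carrier by blast
  obtain F' where F': "qs_mor A A F'" "fcomp SC F' F = fid SC" "fcomp SC F F' = fid SC"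
    using F(2) unfolding qs_aut_def A_simps(1) by auto
  have aF': "qs_aut A F'" unfolding qs_aut_def A_simps(1) using F' F(2) qa_qm by blast
  hence "acls A F' \<in> carrier (hAut A)" unfolding hAut_carrier by blast
  moreover have "acls A F' \<otimes>\<^bsub>hAut A\<^esub> x = \<one>\<^bsub>hAut A\<^esub>"
    using amult[OF aF' F(2)] F(1) F'(2) hAut_one by simp
  ultimately show "\<exists>y\<in>carrier (hAut A). y \<otimes>\<^bsub>hAut A\<^esub> x = \<one>\<^bsub>hAut A\<^esub>" by blast
qed

section \<open>autofunctors\<close>

lemma AutG_carrier: "carrier (AutG G) = {u. is_autofunctor G u}" unfolding AutG_def by simp
lemma AutG_mult: "x \<otimes>\<^bsub>AutG G\<^esub> y = fcomp G x y" unfolding AutG_def by simp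

lemma Sf_qa: assumes "is_autofunctor G u" shows "qs_aut A (Stilde_fun G u)"
proof -
  obtain u' where u: "is_functor G G u" "is_functor G G u'" "fcomp G u' u = fid G" "fcomp G u u' = fid G"
    using assms unfolding is_autofunctor_def by blast
  have "fcomp SC (Stilde_fun G u') (Stilde_fun G u) = fid SC"
    using Sf_fcomp[OF u(2) u(1)] u(3) Sf_fid by simp
  moreover have "fcomp SC (Stilde_fun G u) (Stilde_fun G u') = fid SC"
    using Sf_fcomp[OF u(1) u(2)] u(4) Sf_fid by simp
  ultimately show ?thesis unfolding qs_aut_def A_simps(1) using Sf_qm u by blast
qed

lemma Sf_sh: assumes "is_autofunctor G u" shows "self_heq A (Stilde_fun G u)"
proof -
  obtain F' where F': "qs_mor A A F'" "fcomp SC F' (Stilde_fun G u) = fid SC" "fcomp SC (Stilde_fun G u) F' = fid SC"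
    using Sf_qa[OF assms] unfolding qs_aut_def A_simps(1) by blast
  show ?thesis unfolding sh_iff using F' Sf_qa[OF assms] qa_qm by metis
qed

definition "uF F = ((\<lambda>x\<in>Ob. cd (fst F (e x))), J F)"

lemma uF_fun: assumes qF: "qs_mor A A F" shows "is_functor G G (uF F)"
  unfolding is_functor_def
proof (intro conjI ballI impI)
  fix x assume x: "x \<in> Ob"
  show "fst (uF F) x \<in> Ob" using x qm_obj[OF qF] unfolding uF_def by simp
  show "snd (uF F) (e x) = e (fst (uF F) x)" using x J_e[OF qF x] unfolding uF_def by simp
next
  fix a assume a: "a \<in> M"
  show "snd (uF F) a \<in> M" "dm (snd (uF F) a) = fst (uF F) (dm a)" "cd (snd (uF F) a) = fst (uF F) (cd a)"
    using J_props[OF qF a] a unfolding uF_def by simp_all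
next
  fix f g assume "f \<in> M" "g \<in> M" "cd f = dm g"
  then show "snd (uF F) (cp g f) = cp (snd (uF F) g) (snd (uF F) f)"
    using J_cp[OF qF] unfolding uF_def by simp
next
  show "fst (uF F) \<in> extensional Ob" "snd (uF F) \<in> extensional M"
    unfolding uF_def using J_ext by simp_all
qed

lemma uF_inv: assumes qF: "qs_mor A A F" and qK: "qs_mor A A K" and KF: "fcomp SC K F = fid SC"
  shows "fcomp G (uF K) (uF F) = fid G"
proof -
  have JJ: "J K (J F a) = a" if "a \<in> M" for a
  proof -
    have "J (fcomp SC K F) a = a" using KF J_fid that by simp
    thus ?thesis using J_fcomp[OF qK qF] that by (simp add: compose_def)
  qed
  have "fst (fcomp G (uF K) (uF F)) = fst (fid G)"
  proof (rule extensionalityI)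
    show "fst (fcomp G (uF K) (uF F)) \<in> extensional Ob" "fst (fid G) \<in> extensional Ob"
      unfolding fcomp_def fid_def by simp_all
    fix x assume x: "x \<in> Ob"
    have ob: "fst (uF F) x \<in> Ob" using fun_obj[OF uF_fun[OF qF] x] .
    have "fst (uF K) (fst (uF F) x) = dm (snd (uF K) (e (fst (uF F) x)))" by (rule fu_fst[OF uF_fun[OF qK] ob])
    also have "\<dots> = dm (snd (uF K) (snd (uF F) (e x)))" using fu_e[OF uF_fun[OF qF] x] by simp
    also have "\<dots> = x" using JJ x unfolding uF_def by simp
    finally show "fst (fcomp G (uF K) (uF F)) x = fst (fid G) x" using x unfolding fcomp_def fid_def by simp
  qed
  moreover have "snd (fcomp G (uF K) (uF F)) = snd (fid G)"
    unfolding fcomp_def fid_def uF_def using JJ by (auto intro!: restrict_ext)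
  ultimately show ?thesis by (simp add: prod_eq_iff)
qed

lemma qa_uF: assumes "qs_aut A F"
  shows "is_autofunctor G (uF F)" "J (Stilde_fun G (uF F)) = J F"
proof -
  obtain K where K: "qs_mor A A K" "fcomp SC K F = fid SC" "fcomp SC F K = fid SC"
    using assms unfolding qs_aut_def A_simps(1) by blast
  have qF: "qs_mor A A F" using qa_qm[OF assms] .
  show "is_autofunctor G (uF F)" unfolding is_autofunctor_def
    using uF_fun[OF qF] uF_fun[OF K(1)] uF_inv[OF qF K(1) K(2)] uF_inv[OF K(1) qF K(3)] by blast
  show "J (Stilde_fun G (uF F)) = J F" using J_Sf[OF uF_fun[OF qF]] unfolding uF_def by simp
qed

lemma autof_fun: "is_autofunctor G u \<Longrightarrow> is_functor G G u" unfolding is_autofunctor_def by blast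

lemma autof_eq: assumes "is_autofunctor G u" "is_autofunctor G v" "snd u = snd v" shows "u = v"
proof -
  have u: "is_functor G G u" and v: "is_functor G G v" using assms autof_fun by auto
  have "fst u = fst v"
  proof (rule extensionalityI[OF fun_ext(1)[OF u] fun_ext(1)[OF v]])
    fix x assume "x \<in> Ob" thus "fst u x = fst v x" using fu_fst[OF u] fu_fst[OF v] assms(3) by simp
  qed
  thus ?thesis using assms(3) by (simp add: prod_eq_iff)
qed

end

theorem theorem4p7:
  fixes G :: "('o, 'm) cat"
  assumes "is_groupoid G"
  shows "(\<forall>u \<in> carrier (AutG G). eta (Stilde G) (S2 G u) = S1 G u)
      \<and> group_hom (AutG G) (haut (Stilde G)) (S1 G)
      \<and> inj_on (S1 G) (carrier (AutG G))
      \<and> (finite (cobj G) \<and> finite (cmor G) \<longrightarrow>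
           group_hom (AutG G) (hAut (Stilde G)) (S2 G)
           \<and> S2 G \<in> iso (AutG G) (hAut (Stilde G)))"
proof -
  interpret gpd G by (rule gpd.intro) (rule assms)
  have grA: "group (AutG G)" by (rule AutG_group[OF cat])
  have aut: "is_autofunctor G u" if "u \<in> carrier (AutG G)" for u using that AutG_carrier by simp
  have qa: "qs_aut A (Stilde_fun G u)" if "u \<in> carrier (AutG G)" for u using Sf_qa[OF aut[OF that]] .
  have qm: "qs_mor A A (Stilde_fun G u)" if "u \<in> carrier (AutG G)" for u using qa_qm[OF qa[OF that]] .
  have fu: "is_functor G G u" if "u \<in> carrier (AutG G)" for u using autof_fun[OF aut[OF that]] .
  have part1: "eta A (S2 G u) = S1 G u" if u: "u \<in> carrier (AutG G)" for u
  proof -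
    have "qs_aut A (SOME X. X \<in> acls A (Stilde_fun G u)) \<and>
      J (SOME X. X \<in> acls A (Stilde_fun G u)) = J (Stilde_fun G u)" using some_acls[OF qa[OF u]] .
    then show ?thesis unfolding eta_def S2_def S1_def using hcls_eq qa_qm qm[OF u] by blast
  qed
  have S1car: "S1 G u \<in> carrier (haut A)" if u: "u \<in> carrier (AutG G)" for u
    unfolding S1_def haut_carrier using Sf_sh[OF aut[OF u]] by blast
  have S2car: "S2 G u \<in> carrier (hAut A)" if u: "u \<in> carrier (AutG G)" for u
    unfolding S2_def hAut_carrier using qa[OF u] by blast
  have S1mult: "S1 G (u \<otimes>\<^bsub>AutG G\<^esub> v) = S1 G u \<otimes>\<^bsub>haut A\<^esub> S1 G v"
    if u: "u \<in> carrier (AutG G)" and v: "v \<in> carrier (AutG G)" for u v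
    unfolding S1_def AutG_mult using hmult[OF qm[OF u] qm[OF v]] Sf_fcomp[OF fu[OF u] fu[OF v]] by simp
  have S2mult: "S2 G (u \<otimes>\<^bsub>AutG G\<^esub> v) = S2 G u \<otimes>\<^bsub>hAut A\<^esub> S2 G v"
    if u: "u \<in> carrier (AutG G)" and v: "v \<in> carrier (AutG G)" for u v
    unfolding S2_def AutG_mult using amult[OF qa[OF u] qa[OF v]] Sf_fcomp[OF fu[OF u] fu[OF v]] by simp
  have gh1: "group_hom (AutG G) (haut A) (S1 G)"
    unfolding group_hom_def group_hom_axioms_def hom_def
    using grA haut_group S1car S1mult by (simp add: Pi_iff)
  have gh2: "group_hom (AutG G) (hAut A) (S2 G)"
    unfolding group_hom_def group_hom_axioms_def hom_def
    using grA hAut_group S2car S2mult by (simp add: Pi_iff)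
  have inj1: "inj_on (S1 G) (carrier (AutG G))"
  proof (rule inj_onI)
    fix u v assume u: "u \<in> carrier (AutG G)" and v: "v \<in> carrier (AutG G)" and eq: "S1 G u = S1 G v"
    have "J (Stilde_fun G u) = J (Stilde_fun G v)" using eq hcls_eq[OF qm[OF u] qm[OF v]] unfolding S1_def by simp
    hence "snd u = snd v" using J_Sf[OF fu[OF u]] J_Sf[OF fu[OF v]] by simp
    thus "u = v" using autof_eq aut u v by blast
  qed
  have inj2: "inj_on (S2 G) (carrier (AutG G))"
  proof (rule inj_onI)
    fix u v assume u: "u \<in> carrier (AutG G)" and v: "v \<in> carrier (AutG G)" and eq: "S2 G u = S2 G v"
    have "J (Stilde_fun G u) = J (Stilde_fun G v)" using eq acls_eq[OF qa[OF u] qa[OF v]] unfolding S2_def by simp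
    hence "snd u = snd v" using J_Sf[OF fu[OF u]] J_Sf[OF fu[OF v]] by simp
    thus "u = v" using autof_eq aut u v by blast
  qed
  have surj2: "S2 G ` carrier (AutG G) = carrier (hAut A)"
  proof
    show "S2 G ` carrier (AutG G) \<subseteq> carrier (hAut A)" using S2car by blast
    show "carrier (hAut A) \<subseteq> S2 G ` carrier (AutG G)"
    proof
      fix X assume "X \<in> carrier (hAut A)"
      then obtain F where F: "X = acls A F" "qs_aut A F" unfolding hAut_carrier by blast
      have uc: "uF F \<in> carrier (AutG G)" using qa_uF(1)[OF F(2)] AutG_carrier by simp
      have "S2 G (uF F) = acls A F" unfolding S2_def
        using acls_eq[OF qa[OF uc] F(2)] qa_uF(2)[OF F(2)] by simp
      thus "X \<in> S2 G ` carrier (AutG G)" using uc F(1) by blast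
    qed
  qed
  have iso2: "S2 G \<in> iso (AutG G) (hAut A)"
    unfolding iso_def bij_betw_def using gh2 inj2 surj2 group_hom.homh by blast
  show ?thesis using part1 gh1 inj1 gh2 iso2 by blast
qed

end
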